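(* Let $X$, $A$, $B$, $C$, $Y$, $G_+$, $G_-$, $T_+$, $T_-$ be as in the context. Then: (i) $T:\mathbb{R}\to L(Y,Y)$, $T(t):=T_+(t)$ for $t\geqslant0$ and $T(t):=T_-(-t)$ for $t<0$, is a strongly continuous group. (ii) For every $t_0\in\mathbb{R}$ and every $\xi\in D(G_+)$ there is a uniquely determined differentiable map $u:\mathbb{R}\to Y$ with $u(t_0)=\xi$ and $u'(t)=-G_+u(t)$ for all $t\in\mathbb{R}$. (iii) For such $u$, the function $t\mapsto(u(t)|u(t))$ is differentiable with derivative $-2\,\mathrm{Re}\,(u(t)|G_+u(t))$ for all $t\in\mathbb{R}$.
   Context: $(X,\langle\cdot|\cdot\rangle)$ is a nontrivial complex Hilbert space with norm $\|\cdot\|$. $A:D(A)\to X$ is a densely defined self-adjoint linear operator with $\langle\xi|A\xi\rangle\geqslant\varepsilon\langle\xi|\xi\rangle$ for all $\xi\in D(A)$ for some $\varepsilon>0$; $A^{1/2}$ is its positive self-adjoint square root. $B:D(A^{1/2})\to X$ is linear with $\|B\xi\|^2\leqslant a^2\|A^{1/2}\xi\|^2+b^2\|\xi\|^2$ for all $\xi\in D(A^{1/2})$, for some $a\in[0,1)$, $b\in\mathbb{R}$, and $B$ is symmetric or bounded. $C:D(A^{1/2})\to X$ is linear with $\|C\xi\|^2\leqslant c^2\|A^{1/2}\xi\|^2+d^2\|\xi\|^2$ for all $\xi\in D(A^{1/2})$, for some real $c,d$. $Y:=D(A^{1/2})\times X$ with inner product $(\xi|\eta):=\langle A^{1/2}\xi_1|A^{1/2}\eta_1\rangle+\langle\xi_2|\eta_2\rangle$.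 $H:D(A)\times D(A^{1/2})\to Y$, $H\xi:=(-i\xi_2,iA\xi_1)$; $\hat B:D(H)\to Y$, $\hat B\xi:=(0,-B\xi_2)$; $V:Y\to Y$, $V\xi:=(0,iC\xi_1)$; $G_+:=-i(H+\hat B+V)$, $G_-:=i(H+\hat B+V)$ with domain $D(H)$. $G_\pm$ generate strongly continuous semigroups $T_\pm$ on $[0,\infty)$ in the sense $T_\pm(t)=e^{-tG_\pm}$, i.e. $\frac{d}{dt}T_\pm(t)\xi=-G_\pm T_\pm(t)\xi$ for $\xi\in D(H)$. *)

theory Defs
  imports "HOL-Analysis.Analysis"
begin

section \<open>Complex vector spaces as real vector spaces with a complex structure J (= multiplication by i)\<close>

definition complex_structure :: "('a::real_vector \<Rightarrow> 'a) \<Rightarrow> bool" where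
  "complex_structure J \<longleftrightarrow> linear J \<and> (\<forall>x. J (J x) = - x)"

definition cscale :: "('a::real_vector \<Rightarrow> 'a) \<Rightarrow> complex \<Rightarrow> 'a \<Rightarrow> 'a" where
  "cscale J c x = Re c *\<^sub>R x + Im c *\<^sub>R J x"

definition cinner_space :: "('a::real_vector \<Rightarrow> 'a) \<Rightarrow> ('a \<Rightarrow> 'a \<Rightarrow> complex) \<Rightarrow> bool" where
  "cinner_space J ip \<longleftrightarrow> complex_structure J \<and>
     (\<forall>x y. ip x y = cnj (ip y x)) \<and>
     (\<forall>x y z. ip x (y + z) = ip x y + ip x z) \<and>
     (\<forall>c x y. ip x (cscale J c y) = c * ip x y) \<and>
     (\<forall>x. 0 \<le> Re (ip x x)) \<and>
     (\<forall>x. ip x x = 0 \<longrightarrow> x = 0)"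

definition cnorm :: "('a \<Rightarrow> 'a \<Rightarrow> complex) \<Rightarrow> 'a \<Rightarrow> real" where
  "cnorm ip x = sqrt (Re (ip x x))"

definition hilbert_space :: "('a::real_vector \<Rightarrow> 'a) \<Rightarrow> ('a \<Rightarrow> 'a \<Rightarrow> complex) \<Rightarrow> bool" where
  "hilbert_space J ip \<longleftrightarrow> cinner_space J ip \<and>
     (\<forall>f :: nat \<Rightarrow> 'a.
        (\<forall>e>0. \<exists>N. \<forall>m\<ge>N. \<forall>n\<ge>N. cnorm ip (f m - f n) < e) \<longrightarrow>
        (\<exists>l. (\<lambda>n. cnorm ip (f n - l)) \<longlonglongrightarrow> 0))"

definition csubspace_on :: "('a::real_vector \<Rightarrow> 'a) \<Rightarrow> 'a set \<Rightarrow> bool" where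
  "csubspace_on J D \<longleftrightarrow> 0 \<in> D \<and> (\<forall>x\<in>D. \<forall>y\<in>D. x + y \<in> D) \<and> (\<forall>c. \<forall>x\<in>D. cscale J c x \<in> D)"

definition lin_on :: "('a::real_vector \<Rightarrow> 'a) \<Rightarrow> 'a set \<Rightarrow> ('a \<Rightarrow> 'a) \<Rightarrow> bool" where
  "lin_on J D f \<longleftrightarrow> csubspace_on J D \<and>
     (\<forall>x\<in>D. \<forall>y\<in>D. f (x + y) = f x + f y) \<and>
     (\<forall>c. \<forall>x\<in>D. f (cscale J c x) = cscale J c (f x))"

definition dense_in :: "('a::real_vector \<Rightarrow> 'a \<Rightarrow> complex) \<Rightarrow> 'a set \<Rightarrow> bool" where
  "dense_in ip D \<longleftrightarrow> (\<forall>x. \<forall>e>0. \<exists>y\<in>D. cnorm ip (x - y) < e)"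

definition symmetric_op :: "('a \<Rightarrow> 'a \<Rightarrow> complex) \<Rightarrow> 'a set \<Rightarrow> ('a \<Rightarrow> 'a) \<Rightarrow> bool" where
  "symmetric_op ip D f \<longleftrightarrow> (\<forall>x\<in>D. \<forall>y\<in>D. ip (f x) y = ip x (f y))"

text \<open>Densely defined, symmetric, and the adjoint has the same domain (hence A* = A).\<close>
definition self_adjoint :: "('a::real_vector \<Rightarrow> 'a) \<Rightarrow> ('a \<Rightarrow> 'a \<Rightarrow> complex) \<Rightarrow> 'a set \<Rightarrow> ('a \<Rightarrow> 'a) \<Rightarrow> bool" where
  "self_adjoint J ip D f \<longleftrightarrow> lin_on J D f \<and> dense_in ip D \<and> symmetric_op ip D f \<and>
     (\<forall>y z. (\<forall>x\<in>D. ip (f x) y = ip x z) \<longrightarrow> y \<in> D)"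

definition is_pos_sqrt :: "('a::real_vector \<Rightarrow> 'a) \<Rightarrow> ('a \<Rightarrow> 'a \<Rightarrow> complex) \<Rightarrow> 'a set \<Rightarrow> ('a \<Rightarrow> 'a)
    \<Rightarrow> 'a set \<Rightarrow> ('a \<Rightarrow> 'a) \<Rightarrow> bool" where
  "is_pos_sqrt J ip DA A DS S \<longleftrightarrow> self_adjoint J ip DS S \<and> (\<forall>x\<in>DS. 0 \<le> Re (ip x (S x))) \<and>
     DA = {x \<in> DS. S x \<in> DS} \<and> (\<forall>x\<in>DA. S (S x) = A x)"

section \<open>The space Y = D(A^(1/2)) x X\<close>

definition Yset :: "'a set \<Rightarrow> ('a \<times> 'a) set" where
  "Yset DS = DS \<times> UNIV"

definition ipY :: "('a \<Rightarrow> 'a \<Rightarrow> complex) \<Rightarrow> ('a \<Rightarrow> 'a) \<Rightarrow> 'a \<times> 'a \<Rightarrow> 'a \<times> 'a \<Rightarrow> complex" where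
  "ipY ip S \<xi> \<eta> = ip (S (fst \<xi>)) (S (fst \<eta>)) + ip (snd \<xi>) (snd \<eta>)"

definition nY :: "('a \<Rightarrow> 'a \<Rightarrow> complex) \<Rightarrow> ('a \<Rightarrow> 'a) \<Rightarrow> 'a \<times> 'a \<Rightarrow> real" where
  "nY ip S \<xi> = sqrt (Re (ipY ip S \<xi> \<xi>))"

definition pscale :: "('a::real_vector \<Rightarrow> 'a) \<Rightarrow> complex \<Rightarrow> 'a \<times> 'a \<Rightarrow> 'a \<times> 'a" where
  "pscale J c \<xi> = (cscale J c (fst \<xi>), cscale J c (snd \<xi>))"

definition Hop :: "('a::real_vector \<Rightarrow> 'a) \<Rightarrow> ('a \<Rightarrow> 'a) \<Rightarrow> 'a \<times> 'a \<Rightarrow> 'a \<times> 'a" where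
  "Hop J A \<xi> = (cscale J (- \<i>) (snd \<xi>), cscale J \<i> (A (fst \<xi>)))"

definition Bhat :: "('a::real_vector \<Rightarrow> 'a) \<Rightarrow> 'a \<times> 'a \<Rightarrow> 'a \<times> 'a" where
  "Bhat B \<xi> = (0, - B (snd \<xi>))"

definition Vop :: "('a::real_vector \<Rightarrow> 'a) \<Rightarrow> ('a \<Rightarrow> 'a) \<Rightarrow> 'a \<times> 'a \<Rightarrow> 'a \<times> 'a" where
  "Vop J C \<xi> = (0, cscale J \<i> (C (fst \<xi>)))"

definition Gplus :: "('a::real_vector \<Rightarrow> 'a) \<Rightarrow> ('a \<Rightarrow> 'a) \<Rightarrow> ('a \<Rightarrow> 'a) \<Rightarrow> ('a \<Rightarrow> 'a) \<Rightarrow> 'a \<times> 'a \<Rightarrow> 'a \<times> 'a" where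
  "Gplus J A B C \<xi> = pscale J (- \<i>) (Hop J A \<xi> + Bhat B \<xi> + Vop J C \<xi>)"

definition Gminus :: "('a::real_vector \<Rightarrow> 'a) \<Rightarrow> ('a \<Rightarrow> 'a) \<Rightarrow> ('a \<Rightarrow> 'a) \<Rightarrow> ('a \<Rightarrow> 'a) \<Rightarrow> 'a \<times> 'a \<Rightarrow> 'a \<times> 'a" where
  "Gminus J A B C \<xi> = pscale J \<i> (Hop J A \<xi> + Bhat B \<xi> + Vop J C \<xi>)"

definition DH :: "'a set \<Rightarrow> 'a set \<Rightarrow> ('a \<times> 'a) set" where
  "DH DA DS = DA \<times> DS"

definition bounded_lin_Y :: "('a::real_vector \<Rightarrow> 'a) \<Rightarrow> ('a \<Rightarrow> 'a \<Rightarrow> complex) \<Rightarrow> ('a \<Rightarrow> 'a) \<Rightarrow> 'a set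
    \<Rightarrow> ('a \<times> 'a \<Rightarrow> 'a \<times> 'a) \<Rightarrow> bool" where
  "bounded_lin_Y J ip S DS T \<longleftrightarrow>
     (\<forall>\<xi>\<in>Yset DS. T \<xi> \<in> Yset DS) \<and>
     (\<forall>\<xi>\<in>Yset DS. \<forall>\<eta>\<in>Yset DS. T (\<xi> + \<eta>) = T \<xi> + T \<eta>) \<and>
     (\<forall>c. \<forall>\<xi>\<in>Yset DS. T (pscale J c \<xi>) = pscale J c (T \<xi>)) \<and>
     (\<exists>K. \<forall>\<xi>\<in>Yset DS. nY ip S (T \<xi>) \<le> K * nY ip S \<xi>)"

definition sc_semigroup :: "('a::real_vector \<Rightarrow> 'a) \<Rightarrow> ('a \<Rightarrow> 'a \<Rightarrow> complex) \<Rightarrow> ('a \<Rightarrow> 'a) \<Rightarrow> 'a set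
    \<Rightarrow> (real \<Rightarrow> 'a \<times> 'a \<Rightarrow> 'a \<times> 'a) \<Rightarrow> bool" where
  "sc_semigroup J ip S DS T \<longleftrightarrow>
     (\<forall>t\<ge>0. bounded_lin_Y J ip S DS (T t)) \<and>
     (\<forall>\<xi>\<in>Yset DS. T 0 \<xi> = \<xi>) \<and>
     (\<forall>s\<ge>0. \<forall>t\<ge>0. \<forall>\<xi>\<in>Yset DS. T (s + t) \<xi> = T s (T t \<xi>)) \<and>
     (\<forall>\<xi>\<in>Yset DS. \<forall>t\<ge>0. ((\<lambda>s. nY ip S (T s \<xi> - T t \<xi>)) \<longlongrightarrow> 0) (at t within {0..}))"

definition neg_generator :: "('a::real_vector \<Rightarrow> 'a \<Rightarrow> complex) \<Rightarrow> ('a \<Rightarrow> 'a) \<Rightarrow> 'a set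
    \<Rightarrow> (real \<Rightarrow> 'a \<times> 'a \<Rightarrow> 'a \<times> 'a) \<Rightarrow> ('a \<times> 'a) set \<Rightarrow> ('a \<times> 'a \<Rightarrow> 'a \<times> 'a) \<Rightarrow> bool" where
  "neg_generator ip S DS T D G \<longleftrightarrow> D \<subseteq> Yset DS \<and>
     (\<forall>\<xi>\<in>Yset DS.
        ((\<exists>\<eta>\<in>Yset DS. ((\<lambda>h. nY ip S ((1 / h) *\<^sub>R (T h \<xi> - \<xi>) - \<eta>))
            \<longlongrightarrow> 0) (at_right 0)) \<longleftrightarrow> \<xi> \<in> D) \<and>
        (\<xi> \<in> D \<longrightarrow> ((\<lambda>h. nY ip S ((1 / h) *\<^sub>R (T h \<xi> - \<xi>) - (- G \<xi>)))
            \<longlongrightarrow> 0) (at_right 0)))"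

definition sc_group :: "('a::real_vector \<Rightarrow> 'a) \<Rightarrow> ('a \<Rightarrow> 'a \<Rightarrow> complex) \<Rightarrow> ('a \<Rightarrow> 'a) \<Rightarrow> 'a set
    \<Rightarrow> (real \<Rightarrow> 'a \<times> 'a \<Rightarrow> 'a \<times> 'a) \<Rightarrow> bool" where
  "sc_group J ip S DS T \<longleftrightarrow>
     (\<forall>t. bounded_lin_Y J ip S DS (T t)) \<and>
     (\<forall>\<xi>\<in>Yset DS. T 0 \<xi> = \<xi>) \<and>
     (\<forall>s t. \<forall>\<xi>\<in>Yset DS. T (s + t) \<xi> = T s (T t \<xi>)) \<and>
     (\<forall>\<xi>\<in>Yset DS. \<forall>t. ((\<lambda>s. nY ip S (T s \<xi> - T t \<xi>)) \<longlongrightarrow> 0) (at t))"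

definition has_Y_derivative :: "('a::real_vector \<Rightarrow> 'a \<Rightarrow> complex) \<Rightarrow> ('a \<Rightarrow> 'a)
    \<Rightarrow> (real \<Rightarrow> 'a \<times> 'a) \<Rightarrow> 'a \<times> 'a \<Rightarrow> real \<Rightarrow> bool" where
  "has_Y_derivative ip S u v t \<longleftrightarrow>
     ((\<lambda>h. nY ip S ((1 / h) *\<^sub>R (u (t + h) - u t) - v)) \<longlongrightarrow> 0) (at 0)"

end

theory Submission
  imports Defs "HOL-Analysis.Analysis"
begin


locale sip =
  fixes V :: "'b::real_vector set" and P :: "'b \<Rightarrow> 'b \<Rightarrow> complex" and Jv :: "'b \<Rightarrow> 'b"
  assumes V0: "0 \<in> V"
    and Vadd: "x \<in> V \<Longrightarrow> y \<in> V \<Longrightarrow> x + y \<in> V"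
    and Vscale: "x \<in> V \<Longrightarrow> r *\<^sub>R x \<in> V"
    and JV: "x \<in> V \<Longrightarrow> Jv x \<in> V"
    and herm: "x \<in> V \<Longrightarrow> y \<in> V \<Longrightarrow> P x y = cnj (P y x)"
    and add2: "x \<in> V \<Longrightarrow> y \<in> V \<Longrightarrow> z \<in> V \<Longrightarrow> P x (y + z) = P x y + P x z"
    and scale2: "x \<in> V \<Longrightarrow> y \<in> V \<Longrightarrow> P x (r *\<^sub>R y) = of_real r * P x y"
    and J2: "x \<in> V \<Longrightarrow> y \<in> V \<Longrightarrow> P x (Jv y) = \<i> * P x y"
    and pos: "x \<in> V \<Longrightarrow> 0 \<le> Re (P x x)"
begin

definition N where "N x = sqrt (Re (P x x))"

lemma Vminus: "x \<in> V \<Longrightarrow> - x \<in> V"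
  using Vscale[of x "-1"] by simp

lemma Vdiff: "x \<in> V \<Longrightarrow> y \<in> V \<Longrightarrow> x - y \<in> V"
  using Vadd[of x "-y"] Vminus[of y] by simp

lemma add1: "x \<in> V \<Longrightarrow> y \<in> V \<Longrightarrow> z \<in> V \<Longrightarrow> P (x + y) z = P x z + P y z"
  using herm[of "x+y" z] herm[of z x] herm[of z y] add2[of z x y] Vadd[of x y] by simp

lemma scale1: "x \<in> V \<Longrightarrow> y \<in> V \<Longrightarrow> P (r *\<^sub>R x) y = of_real r * P x y"
  using herm[of "r *\<^sub>R x" y] herm[of y x] scale2[of y x r] Vscale[of x r] by simp

lemma zero2: "x \<in> V \<Longrightarrow> P x 0 = 0"
  using scale2[of x 0 0] V0 by simp

lemma zero1: "x \<in> V \<Longrightarrow> P 0 x = 0"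
  using scale1[of 0 x 0] V0 by simp

lemma minus2: "x \<in> V \<Longrightarrow> y \<in> V \<Longrightarrow> P x (- y) = - P x y"
  using scale2[of x y "-1"] by simp

lemma minus1: "x \<in> V \<Longrightarrow> y \<in> V \<Longrightarrow> P (- x) y = - P x y"
  using scale1[of x y "-1"] by simp

lemma diff2: "x \<in> V \<Longrightarrow> y \<in> V \<Longrightarrow> z \<in> V \<Longrightarrow> P x (y - z) = P x y - P x z"
  using add2[of x y "-z"] minus2[of x z] Vminus[of z] by simp

lemma diff1: "x \<in> V \<Longrightarrow> y \<in> V \<Longrightarrow> z \<in> V \<Longrightarrow> P (x - y) z = P x z - P y z"
  using add1[of x "-y" z] minus1[of y z] Vminus[of y] by simp

lemma Im_self: "x \<in> V \<Longrightarrow> Im (P x x) = 0"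
proof -
  assume x: "x \<in> V"
  have "Im (P x x) = - Im (P x x)" using arg_cong[OF herm[OF x x], of Im] by simp
  thus ?thesis by simp
qed

lemma Re_herm: "x \<in> V \<Longrightarrow> y \<in> V \<Longrightarrow> Re (P y x) = Re (P x y)"
  using herm[of x y] by simp

lemma N_nonneg: "x \<in> V \<Longrightarrow> N x \<ge> 0"
  unfolding N_def using pos by simp

lemma N_sq: "x \<in> V \<Longrightarrow> N x ^ 2 = Re (P x x)"
  unfolding N_def using pos[of x] by simp

lemma P_self: "x \<in> V \<Longrightarrow> P x x = of_real (N x ^ 2)"
  using N_sq[of x] Im_self[of x] by (simp add: complex_eq_iff)

lemma quad_expand:
  assumes "x \<in> V" "y \<in> V"
  shows "Re (P (x + t *\<^sub>R y) (x + t *\<^sub>R y)) = Re (P x x) + 2 * t * Re (P x y) + t^2 * Re (P y y)"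
proof -
  have ty: "t *\<^sub>R y \<in> V" using assms Vscale by auto
  have "P (x + t *\<^sub>R y) (x + t *\<^sub>R y) = P x x + P x (t *\<^sub>R y) + (P (t *\<^sub>R y) x + P (t *\<^sub>R y) (t *\<^sub>R y))"
    using add1[OF assms(1) ty] add2 assms ty Vadd by (simp add: add.assoc)
  also have "\<dots> = P x x + of_real t * P x y + (of_real t * P y x + of_real t * (of_real t * P y y))"
    using scale1 scale2 assms ty by simp
  finally show ?thesis using Re_herm[OF assms] by (simp add: power2_eq_square algebra_simps)
qed

lemma CS_Re: assumes "x \<in> V" "y \<in> V" shows "Re (P x y) \<le> N x * N y"
proof -
  define a where "a = Re (P x x)"
  define b where "b = Re (P x y)"
  define c where "c = Re (P y y)"
  have q: "0 \<le> a + 2 * t * b + t^2 * c" for t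
    using quad_expand[OF assms, of t] pos[of "x + t *\<^sub>R y"] Vadd Vscale assms
    unfolding a_def b_def c_def by metis
  have a0: "a \<ge> 0" "c \<ge> 0" using pos assms unfolding a_def c_def by auto
  have "b^2 \<le> a * c"
  proof (cases "c = 0")
    case True
    have "b = 0"
    proof (rule ccontr)
      assume "b \<noteq> 0"
      have "0 \<le> a + 2 * (- (a + 1) / (2 * b)) * b" using q[of "- (a + 1) / (2 * b)"] True by simp
      also have "\<dots> = -1" using \<open>b \<noteq> 0\<close> by (simp add: field_simps)
      finally show False by simp
    qed
    then show ?thesis using True by simp
  next
    case False
    hence cp: "c > 0" using a0 by simp
    have "0 \<le> a + 2 * (- b / c) * b + (- b / c)^2 * c" using q[of "-b/c"] .
    also have "\<dots> = a - b^2 / c" using cp by (simp add: field_simps power2_eq_square)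
    finally show ?thesis using cp by (simp add: field_simps)
  qed
  hence "\<bar>b\<bar> \<le> sqrt (a * c)" using real_le_rsqrt by (metis abs_le_square_iff real_sqrt_abs real_sqrt_le_iff)
  thus ?thesis unfolding N_def a_def b_def c_def by (simp add: real_sqrt_mult)
qed

lemma N_minus: "x \<in> V \<Longrightarrow> N (- x) = N x"
  unfolding N_def using minus1 minus2 Vminus by simp

lemma abs_CS_Re: assumes "x \<in> V" "y \<in> V" shows "\<bar>Re (P x y)\<bar> \<le> N x * N y"
  using CS_Re[OF assms] CS_Re[of "-x" y] minus1[OF assms] N_minus assms Vminus by force

lemma N_J: "y \<in> V \<Longrightarrow> N (Jv y) = N y"
proof -
  assume y: "y \<in> V"
  have "P (Jv y) (Jv y) = \<i> * P (Jv y) y" using J2 JV y by simp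
  also have "P (Jv y) y = cnj (\<i> * P y y)" using herm[of "Jv y" y] J2[of y y] JV y by simp
  finally have "P (Jv y) (Jv y) = cnj (P y y)" by simp
  thus ?thesis unfolding N_def by simp
qed

lemma norm_P: assumes "x \<in> V" "y \<in> V" shows "cmod (P x y) \<le> 2 * N x * N y"
proof -
  have "Im (P x y) = - Re (P x (Jv y))" using J2 assms by simp
  hence "\<bar>Im (P x y)\<bar> \<le> N x * N y" using abs_CS_Re[of x "Jv y"] N_J assms JV by simp
  thus ?thesis using cmod_le[of "P x y"] abs_CS_Re[OF assms] by simp
qed

lemma tri: assumes "x \<in> V" "y \<in> V" shows "N (x + y) \<le> N x + N y"
proof -
  have "N (x + y) ^ 2 = Re (P x x) + 2 * Re (P x y) + Re (P y y)"
    using N_sq Vadd assms quad_expand[OF assms, of 1] by simp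
  also have "\<dots> \<le> (N x + N y)^2" using CS_Re[OF assms] N_sq assms by (simp add: power2_eq_square algebra_simps)
  finally show ?thesis using N_nonneg assms by (meson add_nonneg_nonneg power2_le_imp_le)
qed

lemma N_scale: "x \<in> V \<Longrightarrow> N (r *\<^sub>R x) = \<bar>r\<bar> * N x"
proof -
  assume x: "x \<in> V"
  have "P (r *\<^sub>R x) (r *\<^sub>R x) = of_real (r^2) * P x x" using scale1 scale2 x Vscale by (simp add: power2_eq_square)
  thus ?thesis unfolding N_def by (simp add: real_sqrt_mult)
qed

lemma N_diff_comm: "x \<in> V \<Longrightarrow> y \<in> V \<Longrightarrow> N (x - y) = N (y - x)"
  using N_minus[of "y - x"] Vdiff by simp

lemma tri_diff: assumes "x \<in> V" "y \<in> V" "z \<in> V" shows "N (x - z) \<le> N (x - y) + N (y - z)"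
  using tri[of "x - y" "y - z"] assms Vdiff by simp

lemma rev_tri: assumes "x \<in> V" "y \<in> V" shows "\<bar>N x - N y\<bar> \<le> N (x - y)"
  using tri[of "x - y" y] tri[of "y - x" x] assms Vdiff N_diff_comm[OF assms] by auto

lemma N_zero[simp]: "N 0 = 0"
  unfolding N_def using zero1 V0 by simp

definition Nlim where "Nlim F f l \<longleftrightarrow> ((\<lambda>x. N (f x - l)) \<longlongrightarrow> 0) F"

lemma Nlim_add:
  assumes "Nlim F f l" "Nlim F g m" "eventually (\<lambda>x. f x \<in> V \<and> g x \<in> V) F" "l \<in> V" "m \<in> V"
  shows "Nlim F (\<lambda>x. f x + g x) (l + m)"
  unfolding Nlim_def
proof (rule tendsto_sandwich[where f="\<lambda>_. 0" and h="\<lambda>x. N (f x - l) + N (g x - m)"])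
  show "\<forall>\<^sub>F n in F. 0 \<le> N (f n + g n - (l + m))"
    using assms(3) by eventually_elim (metis N_nonneg Vadd Vdiff assms(4,5))
  show "\<forall>\<^sub>F n in F. N (f n + g n - (l + m)) \<le> N (f n - l) + N (g n - m)"
    using assms(3) by eventually_elim (use tri[of "f _ - l" "g _ - m"] Vdiff assms(4,5) in \<open>auto simp: algebra_simps\<close>)
  show "((\<lambda>x. N (f x - l) + N (g x - m)) \<longlongrightarrow> 0) F" using assms(1,2) unfolding Nlim_def
    using tendsto_add by fastforce
qed simp

lemma Nlim_scale:
  assumes "Nlim F f l" "eventually (\<lambda>x. f x \<in> V) F" "l \<in> V"
  shows "Nlim F (\<lambda>x. r *\<^sub>R f x) (r *\<^sub>R l)"
  unfolding Nlim_def
proof -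
  have "\<forall>\<^sub>F x in F. N (r *\<^sub>R f x - r *\<^sub>R l) = \<bar>r\<bar> * N (f x - l)"
    using assms(2) by eventually_elim (metis N_scale Vdiff assms(3) scaleR_diff_right)
  moreover have "((\<lambda>x. \<bar>r\<bar> * N (f x - l)) \<longlongrightarrow> 0) F" using assms(1) unfolding Nlim_def
    using tendsto_mult_right_zero by blast
  ultimately show "((\<lambda>x. N (r *\<^sub>R f x - r *\<^sub>R l)) \<longlongrightarrow> 0) F"
    using tendsto_cong by fastforce
qed

lemma Nlim_minus:
  assumes "Nlim F f l" "eventually (\<lambda>x. f x \<in> V) F" "l \<in> V"
  shows "Nlim F (\<lambda>x. - f x) (- l)"
  using Nlim_scale[OF assms, of "-1"] by simp

lemma Nlim_diff:
  assumes "Nlim F f l" "Nlim F g m" "eventually (\<lambda>x. f x \<in> V \<and> g x \<in> V) F" "l \<in> V" "m \<in> V"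
  shows "Nlim F (\<lambda>x. f x - g x) (l - m)"
proof -
  have "Nlim F (\<lambda>x. - g x) (- m)" using Nlim_minus[OF assms(2) _ assms(5)] assms(3)
    by (simp add: eventually_conj_iff)
  moreover have "eventually (\<lambda>x. f x \<in> V \<and> - g x \<in> V) F" using assms(3)
    by eventually_elim (auto intro: Vminus)
  ultimately show ?thesis using Nlim_add[OF assms(1)] assms(4,5) Vminus by fastforce
qed

lemma Nlim_const: "Nlim F (\<lambda>_. l) l"
  unfolding Nlim_def by simp

lemma Nlim_cong:
  assumes "Nlim F f l" "eventually (\<lambda>x. f x = g x) F" shows "Nlim F g l"
proof -
  have "\<forall>\<^sub>F x in F. N (f x - l) = N (g x - l)" using assms(2) by (rule eventually_mono) simp
  thus ?thesis using assms(1) tendsto_cong unfolding Nlim_def by fastforce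
qed

lemma Nlim_op:
  assumes "Nlim F f l" "eventually (\<lambda>x. f x \<in> V) F" "l \<in> V"
    and "\<And>x y. x \<in> V \<Longrightarrow> y \<in> V \<Longrightarrow> L (x - y) = L x - L y"
    and "\<And>x. x \<in> V \<Longrightarrow> N (L x) \<le> K * N x"
    and "\<And>x. x \<in> V \<Longrightarrow> L x \<in> V"
  shows "Nlim F (\<lambda>x. L (f x)) (L l)"
  unfolding Nlim_def
proof (rule tendsto_sandwich[where f="\<lambda>_. 0" and h="\<lambda>x. K * N (f x - l)"])
  show "\<forall>\<^sub>F n in F. 0 \<le> N (L (f n) - L l)"
    using assms(2) by eventually_elim (metis N_nonneg Vdiff assms(3,4,6))
  show "\<forall>\<^sub>F n in F. N (L (f n) - L l) \<le> K * N (f n - l)"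
    using assms(2) by eventually_elim (metis assms(3,4,5) Vdiff)
  show "((\<lambda>x. K * N (f x - l)) \<longlongrightarrow> 0) F" using assms(1) unfolding Nlim_def
    using tendsto_mult_right_zero by blast
qed simp

lemma Nlim_unique:
  assumes "F \<noteq> bot" "Nlim F f l" "Nlim F f m" "eventually (\<lambda>x. f x \<in> V) F" "l \<in> V" "m \<in> V"
  shows "N (l - m) = 0"
proof -
  have "\<forall>\<^sub>F x in F. N (l - m) \<le> N (f x - l) + N (f x - m)"
    using assms(4) by eventually_elim (metis tri_diff N_diff_comm assms(5,6))
  moreover have "((\<lambda>x. N (f x - l) + N (f x - m)) \<longlongrightarrow> 0) F"
    using assms(2,3) unfolding Nlim_def using tendsto_add by fastforce
  ultimately have "N (l - m) \<le> 0"
    using tendsto_le[OF assms(1) _ tendsto_const] by blast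
  thus ?thesis using N_nonneg[of "l - m"] Vdiff assms(5,6) by simp
qed

end


lemma ev_within: "eventually (\<lambda>x. x \<in> S) (at a within S)"
  by (simp add: eventually_at_filter)

lemma dini_eps:
  fixes f :: "real \<Rightarrow> real"
  assumes ab: "a \<le> b" and cont: "continuous_on {a..b} f"
    and der: "\<And>t. a \<le> t \<Longrightarrow> t < b \<Longrightarrow> \<exists>d. (f has_real_derivative d) (at_right t) \<and> d \<le> 0"
    and e: "e > 0"
  shows "f b \<le> f a + e * (b - a)"
proof -
  define g where "g t = f t - f a - e * (t - a)" for t
  have gc: "continuous_on {a..b} g" unfolding g_def by (intro continuous_intros cont)
  define Z where "Z = {a..b} \<inter> g -` {..0}"
  have Zc: "closed Z" unfolding Z_def by (rule continuous_closed_preimage[OF gc]) auto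
  have aZ: "a \<in> Z" unfolding Z_def g_def using ab by auto
  have Zb: "bdd_above Z" unfolding Z_def by (auto intro: bdd_aboveI[of _ b])
  define c where "c = Sup Z"
  have cZ: "c \<in> Z" unfolding c_def using closed_contains_Sup[OF _ Zb Zc] aZ by auto
  hence cab: "a \<le> c" "c \<le> b" and gc0: "g c \<le> 0" unfolding Z_def by auto
  have "c = b"
  proof (rule ccontr)
    assume "c \<noteq> b"
    hence cb: "c < b" using cab by simp
    obtain d where d: "(f has_real_derivative d) (at_right c)" "d \<le> 0" using der[OF cab(1) cb] by blast
    have l1: "((\<lambda>z. e * (z - a)) has_real_derivative e * (1 - 0)) (at_right c)"
      by (intro DERIV_cmult DERIV_diff DERIV_ident DERIV_const)
    have "((\<lambda>t. f t - f a - e * (t - a)) has_real_derivative d - 0 - e * (1 - 0)) (at_right c)"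
      by (intro DERIV_diff d(1) DERIV_const l1)
    hence "(g has_real_derivative d - e) (at_right c)" unfolding g_def by simp
    hence lim: "((\<lambda>y. (g y - g c) / (y - c)) \<longlongrightarrow> d - e) (at_right c)"
      using has_field_derivative_iff by blast
    have "eventually (\<lambda>y. (g y - g c) / (y - c) < 0) (at_right c)"
      using order_tendstoD(2)[OF lim] d(2) e by simp
    moreover have "eventually (\<lambda>y. y \<in> {c<..<b}) (at_right c)" using eventually_at_right_real[OF cb] .
    ultimately have "eventually (\<lambda>y. (g y - g c) / (y - c) < 0 \<and> y \<in> {c<..<b}) (at_right c)"
      by (rule eventually_conj)
    then obtain y where y: "(g y - g c) / (y - c) < 0" "y \<in> {c<..<b}"
      using eventually_happens'[OF trivial_limit_at_right_real] by blast
    hence "g y < g c" by (simp add: divide_less_0_iff)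
    hence "y \<in> Z" unfolding Z_def using y(2) gc0 cab by auto
    hence "y \<le> c" unfolding c_def using Zb by (simp add: cSup_upper)
    thus False using y(2) by simp
  qed
  thus ?thesis using gc0 unfolding g_def by simp
qed

lemma dini:
  fixes f :: "real \<Rightarrow> real"
  assumes ab: "a \<le> b" and cont: "continuous_on {a..b} f"
    and der: "\<And>t. a \<le> t \<Longrightarrow> t < b \<Longrightarrow> \<exists>d. (f has_real_derivative d) (at_right t) \<and> d \<le> 0"
  shows "f b \<le> f a"
proof (rule ccontr)
  assume "\<not> f b \<le> f a"
  hence fb: "f b > f a" by simp
  hence "a < b" using ab by (cases "a = b") auto
  define e where "e = (f b - f a) / (2 * (b - a))"
  have e: "e > 0" unfolding e_def using fb \<open>a < b\<close> by simp
  have "f b \<le> f a + e * (b - a)" by (rule dini_eps[OF ab cont der e])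
  also have "\<dots> = f a + (f b - f a) / 2"
  proof -
    have bz: "b - a \<noteq> 0" using \<open>a < b\<close> by simp
    have "e * (b - a) = (f b - f a) / 2" unfolding e_def using bz by (simp add: field_simps)
    thus ?thesis by simp
  qed
  finally have "f b \<le> f a + (f b - f a) / 2" .
  hence "2 * f b \<le> 2 * f a + (f b - f a)" by (simp add: field_simps)
  thus False using fb by simp
qed

lemma gronwall_right:
  fixes f :: "real \<Rightarrow> real"
  assumes T0: "0 \<le> T0" and cont: "continuous_on {0..T0} f"
    and der: "\<And>t. 0 \<le> t \<Longrightarrow> t < T0 \<Longrightarrow> \<exists>d. (f has_real_derivative d) (at_right t) \<and> d \<le> L * f t"
  shows "f T0 \<le> exp (L * T0) * f 0"
proof -
  define g where "g t = exp (- L * t) * f t" for t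
  have gc: "continuous_on {0..T0} g" unfolding g_def by (intro continuous_intros cont)
  have "g T0 \<le> g 0"
  proof (rule dini[OF T0 gc])
    fix t assume t: "0 \<le> t" "t < T0"
    obtain d where d: "(f has_real_derivative d) (at_right t)" "d \<le> L * f t" using der[OF t] by blast
    have "(g has_real_derivative exp (- L * t) * (d - L * f t)) (at_right t)" unfolding g_def
      by (rule derivative_eq_intros d(1) refl)+ (simp add: algebra_simps)
    moreover have "exp (- L * t) * (d - L * f t) \<le> 0" using d(2) by (simp add: mult_nonneg_nonpos)
    ultimately show "\<exists>d. (g has_real_derivative d) (at_right t) \<and> d \<le> 0" by blast
  qed
  hence "exp (- L * T0) * f T0 \<le> f 0" unfolding g_def by simp
  hence "exp (L * T0) * (exp (- L * T0) * f T0) \<le> exp (L * T0) * f 0" by simp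
  thus ?thesis by (simp add: exp_minus field_simps)
qed


context sip begin

lemma P_expand:
  assumes "x \<in> V" "z \<in> V"
  shows "P (x + t *\<^sub>R z) (x + t *\<^sub>R z) = P x x + of_real t * (P x z + P z x) + of_real t ^ 2 * P z z"
proof -
  have tz: "t *\<^sub>R z \<in> V" using assms Vscale by auto
  have "P (x + t *\<^sub>R z) (x + t *\<^sub>R z) = P x x + P x (t *\<^sub>R z) + (P (t *\<^sub>R z) x + P (t *\<^sub>R z) (t *\<^sub>R z))"
    using add1[OF assms(1) tz] add2 assms tz Vadd by (simp add: add.assoc)
  also have "\<dots> = P x x + of_real t * P x z + (of_real t * P z x + of_real t * (of_real t * P z z))"
    using scale1 scale2 assms tz by simp
  finally show ?thesis by (simp add: power2_eq_square algebra_simps)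
qed

lemma quot_lim:
  assumes F: "eventually (\<lambda>h. h \<noteq> 0) F" "((\<lambda>h. h) \<longlongrightarrow> 0) F"
    and x: "x \<in> V" and v: "v \<in> V" and ev: "eventually (\<lambda>h. y h \<in> V) F"
    and lim: "Nlim F (\<lambda>h. (1/h) *\<^sub>R (y h - x)) v"
  shows "((\<lambda>h. (P (y h) (y h) - P x x) / of_real h) \<longlongrightarrow> P v x + P x v) F"
proof -
  define q where "q h = (1/h) *\<^sub>R (y h - x)" for h
  have qV: "eventually (\<lambda>h. q h \<in> V) F" using ev unfolding q_def
    by eventually_elim (intro Vscale Vdiff x)
  have qlim: "((\<lambda>h. N (q h - v)) \<longlongrightarrow> 0) F" using lim unfolding Nlim_def q_def .
  have a: "((\<lambda>h. P x (q h)) \<longlongrightarrow> P x v) F"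
  proof -
    have "((\<lambda>h. P x (q h) - P x v) \<longlongrightarrow> 0) F"
    proof (rule Lim_null_comparison)
      show "\<forall>\<^sub>F h in F. norm (P x (q h) - P x v) \<le> 2 * N x * N (q h - v)"
        using qV by eventually_elim (metis diff2 norm_P x v Vdiff)
      show "((\<lambda>h. 2 * N x * N (q h - v)) \<longlongrightarrow> 0) F"
        using tendsto_mult_right_zero[OF qlim] by simp
    qed
    thus ?thesis using Lim_null by blast
  qed
  have b: "((\<lambda>h. P (q h) x) \<longlongrightarrow> P v x) F"
  proof -
    have "((\<lambda>h. P (q h) x - P v x) \<longlongrightarrow> 0) F"
    proof (rule Lim_null_comparison)
      show "\<forall>\<^sub>F h in F. norm (P (q h) x - P v x) \<le> 2 * N (q h - v) * N x"
        using qV by eventually_elim (metis diff1 norm_P x v Vdiff)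
      show "((\<lambda>h. 2 * N (q h - v) * N x) \<longlongrightarrow> 0) F"
        using tendsto_mult_left_zero[OF tendsto_mult_right_zero[OF qlim, of 2], of "N x"] by simp
    qed
    thus ?thesis using Lim_null by blast
  qed
  have c: "((\<lambda>h. of_real h * P (q h) (q h)) \<longlongrightarrow> 0) F"
  proof (rule Lim_null_comparison)
    show "\<forall>\<^sub>F h in F. norm (of_real h * P (q h) (q h)) \<le> \<bar>h\<bar> * (N (q h - v) + N v)^2"
      using qV
    proof eventually_elim
      case (elim h)
      have "N (q h) \<le> N (q h - v) + N v" using tri[of "q h - v" v] elim v Vdiff by simp
      hence "N (q h) ^ 2 \<le> (N (q h - v) + N v)^2" using N_nonneg elim by (simp add: power_mono)
      moreover have "norm (of_real h * P (q h) (q h)) = \<bar>h\<bar> * N (q h) ^ 2"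
        using P_self[OF elim] N_nonneg[OF elim] by (simp add: norm_mult norm_power del: of_real_power)
      ultimately show ?case by (simp add: mult_left_mono)
    qed
    have "((\<lambda>h. \<bar>h\<bar> * (N (q h - v) + N v)^2) \<longlongrightarrow> \<bar>0\<bar> * (0 + N v)^2) F"
      by (intro tendsto_intros F(2) qlim)
    thus "((\<lambda>h. \<bar>h\<bar> * (N (q h - v) + N v)^2) \<longlongrightarrow> 0) F" by simp
  qed
  have sum: "((\<lambda>h. P x (q h) + P (q h) x + of_real h * P (q h) (q h)) \<longlongrightarrow> P x v + P v x + 0) F"
    by (intro tendsto_add a b c)
  have eq: "eventually (\<lambda>h. P x (q h) + P (q h) x + of_real h * P (q h) (q h) = (P (y h) (y h) - P x x) / of_real h) F"
    using qV F(1) ev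
  proof eventually_elim
    case (elim h)
    have yh: "y h = x + h *\<^sub>R q h" unfolding q_def using elim by simp
    show ?case unfolding yh P_expand[OF x elim(1)] using elim(2)
      by (simp add: field_simps power2_eq_square)
  qed
  show ?thesis using tendsto_cong[OF eq] sum by (simp add: add.commute)
qed

lemma energy_growth:
  assumes T0: "0 \<le> T0" and wV: "\<And>s. 0 \<le> s \<Longrightarrow> s \<le> T0 \<Longrightarrow> w s \<in> V"
    and cont: "\<And>s. 0 \<le> s \<Longrightarrow> s \<le> T0 \<Longrightarrow> ((\<lambda>r. N (w r - w s)) \<longlongrightarrow> 0) (at s within {0..T0})"
    and der: "\<And>s. 0 \<le> s \<Longrightarrow> s < T0 \<Longrightarrow> v s \<in> V \<and> Nlim (at_right 0) (\<lambda>h. (1/h) *\<^sub>R (w (s+h) - w s)) (v s)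
                   \<and> Re (P (w s) (v s)) \<le> L * N (w s)^2"
  shows "N (w T0)^2 \<le> exp (2 * L * T0) * N (w 0)^2"
proof -
  define f where "f s = Re (P (w s) (w s))" for s
  have fN: "f s = N (w s)^2" if "0 \<le> s" "s \<le> T0" for s unfolding f_def using N_sq wV that by simp
  have cN: "continuous_on {0..T0} (\<lambda>s. N (w s))"
    unfolding continuous_on_eq_continuous_within
  proof
    fix s assume s: "s \<in> {0..T0}"
    have "((\<lambda>r. N (w r) - N (w s)) \<longlongrightarrow> 0) (at s within {0..T0})"
    proof (rule Lim_null_comparison)
      show "\<forall>\<^sub>F r in at s within {0..T0}. norm (N (w r) - N (w s)) \<le> N (w r - w s)"
        using ev_within[of "{0..T0}" s] by eventually_elim (use rev_tri wV s in auto)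
      show "((\<lambda>r. N (w r - w s)) \<longlongrightarrow> 0) (at s within {0..T0})" using cont s by auto
    qed
    thus "continuous (at s within {0..T0}) (\<lambda>s. N (w s))"
      unfolding continuous_within using Lim_null by blast
  qed
  have fc: "continuous_on {0..T0} f"
  proof -
    have "continuous_on {0..T0} (\<lambda>s. N (w s)^2)" by (intro continuous_intros cN)
    thus ?thesis using continuous_on_cong[of "{0..T0}" "{0..T0}" f "\<lambda>s. N (w s)^2"] fN by auto
  qed
  have "f T0 \<le> exp ((2 * L) * T0) * f 0"
  proof (rule gronwall_right[OF T0 fc])
    fix s assume s: "0 \<le> s" "s < T0"
    have vs: "v s \<in> V" and nl: "Nlim (at_right 0) (\<lambda>h. (1/h) *\<^sub>R (w (s+h) - w s)) (v s)"
      and en: "Re (P (w s) (v s)) \<le> L * N (w s)^2" using der[OF s] by auto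
    have ws: "w s \<in> V" using wV s by simp
    have evr: "eventually (\<lambda>h. h \<in> {0<..<T0 - s}) (at_right (0::real))"
      using eventually_at_right_real[of 0 "T0 - s"] s by simp
    have evV: "eventually (\<lambda>h. w (s + h) \<in> V) (at_right 0)"
      using evr by eventually_elim (use wV s in auto)
    have ql: "((\<lambda>h. (P (w (s+h)) (w (s+h)) - P (w s) (w s)) / of_real h) \<longlongrightarrow> P (v s) (w s) + P (w s) (v s)) (at_right 0)"
      by (rule quot_lim[OF _ _ ws vs evV nl])
         (auto simp: eventually_at_filter intro!: tendsto_ident_at[THEN tendsto_within_subset])
    have "((\<lambda>h. Re ((P (w (s+h)) (w (s+h)) - P (w s) (w s)) / of_real h)) \<longlongrightarrow> Re (P (v s) (w s) + P (w s) (v s))) (at_right 0)"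
      by (rule tendsto_Re[OF ql])
    hence "((\<lambda>h. (f (h + s) - f s) / (h + s - s)) \<longlongrightarrow> 2 * Re (P (w s) (v s))) (at_right 0)"
      unfolding f_def using Re_herm[OF ws vs] by (simp add: add.commute Re_divide_of_real)
    hence "((\<lambda>y. (f y - f s) / (y - s)) \<longlongrightarrow> 2 * Re (P (w s) (v s))) (at_right s)"
      unfolding at_right_to_0[of s] filterlim_filtermap by simp
    hence "(f has_real_derivative 2 * Re (P (w s) (v s))) (at_right s)"
      using has_field_derivative_iff by blast
    moreover have "2 * Re (P (w s) (v s)) \<le> 2 * L * f s" using en fN[of s] s by simp
    ultimately show "\<exists>d. (f has_real_derivative d) (at_right s) \<and> d \<le> 2 * L * f s" by blast
  qed
  thus ?thesis using fN[of T0] fN[of 0] T0 by simp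
qed

end


locale absY = sip V P Jv for V :: "'b::real_vector set" and P Jv +
  fixes D :: "'b set"
  assumes D_sub: "D \<subseteq> V" and D0: "0 \<in> D" and Dadd: "x \<in> D \<Longrightarrow> y \<in> D \<Longrightarrow> x + y \<in> D"
    and Dscale: "x \<in> D \<Longrightarrow> r *\<^sub>R x \<in> D"
    and definite: "x \<in> V \<Longrightarrow> N x = 0 \<Longrightarrow> x = 0"
    and dense: "x \<in> V \<Longrightarrow> e > 0 \<Longrightarrow> \<exists>y\<in>D. N (x - y) < e"
begin

lemma DV: "x \<in> D \<Longrightarrow> x \<in> V" using D_sub by auto

lemma Dminus: "x \<in> D \<Longrightarrow> - x \<in> D" using Dscale[of x "-1"] by simp

lemma Ddiff: "x \<in> D \<Longrightarrow> y \<in> D \<Longrightarrow> x - y \<in> D" using Dadd[of x "-y"] Dminus by simp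

lemma Nlim_unique_eq:
  assumes "F \<noteq> bot" "Nlim F f l" "Nlim F f m" "eventually (\<lambda>x. f x \<in> V) F" "l \<in> V" "m \<in> V"
  shows "l = m"
  using Nlim_unique[OF assms] definite[of "l - m"] Vdiff assms(5,6) by simp

end

locale sgp = absY V P Jv D for V :: "'b::real_vector set" and P Jv D +
  fixes T :: "real \<Rightarrow> 'b \<Rightarrow> 'b" and G :: "'b \<Rightarrow> 'b" and \<omega> :: real
  assumes TV: "t \<ge> 0 \<Longrightarrow> x \<in> V \<Longrightarrow> T t x \<in> V"
    and Tadd: "t \<ge> 0 \<Longrightarrow> x \<in> V \<Longrightarrow> y \<in> V \<Longrightarrow> T t (x + y) = T t x + T t y"
    and Tscale: "t \<ge> 0 \<Longrightarrow> x \<in> V \<Longrightarrow> T t (r *\<^sub>R x) = r *\<^sub>R T t x"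
    and Tbnd: "t \<ge> 0 \<Longrightarrow> \<exists>K. \<forall>x\<in>V. N (T t x) \<le> K * N x"
    and T0: "x \<in> V \<Longrightarrow> T 0 x = x"
    and Tsg: "s \<ge> 0 \<Longrightarrow> t \<ge> 0 \<Longrightarrow> x \<in> V \<Longrightarrow> T (s + t) x = T s (T t x)"
    and Tcont: "x \<in> V \<Longrightarrow> t \<ge> 0 \<Longrightarrow> ((\<lambda>s. N (T s x - T t x)) \<longlongrightarrow> 0) (at t within {0..})"
    and gen1: "x \<in> V \<Longrightarrow> (\<exists>y\<in>V. Nlim (at_right 0) (\<lambda>h. (1 / h) *\<^sub>R (T h x - x)) y) \<longleftrightarrow> x \<in> D"
    and gen2: "x \<in> D \<Longrightarrow> Nlim (at_right 0) (\<lambda>h. (1 / h) *\<^sub>R (T h x - x)) (- G x)"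
    and GV: "x \<in> D \<Longrightarrow> G x \<in> V"
    and Gadd: "x \<in> D \<Longrightarrow> y \<in> D \<Longrightarrow> G (x + y) = G x + G y"
    and Gscale: "x \<in> D \<Longrightarrow> G (r *\<^sub>R x) = r *\<^sub>R G x"
    and energy: "x \<in> D \<Longrightarrow> \<bar>Re (P x (G x))\<bar> \<le> \<omega> * N x ^ 2"
    and omega: "\<omega> \<ge> 0"
begin

lemma Tminus: "t \<ge> 0 \<Longrightarrow> x \<in> V \<Longrightarrow> T t (- x) = - T t x"
  using Tscale[of t x "-1"] by simp

lemma Tdiff: "t \<ge> 0 \<Longrightarrow> x \<in> V \<Longrightarrow> y \<in> V \<Longrightarrow> T t (x - y) = T t x - T t y"
  using Tadd[of t x "-y"] Tminus[of t y] Vminus by simp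

lemma Gminus': "x \<in> D \<Longrightarrow> G (- x) = - G x"
  using Gscale[of x "-1"] by simp

lemma Gdiff: "x \<in> D \<Longrightarrow> y \<in> D \<Longrightarrow> G (x - y) = G x - G y"
  using Gadd[of x "-y"] Gminus'[of y] Dminus by simp

lemma evpos: "eventually (\<lambda>h::real. h > 0) (at_right 0)"
  by (simp add: eventually_at_filter)

lemma right_der:
  assumes x: "x \<in> D" and t: "t \<ge> 0"
  shows "T t x \<in> D" "G (T t x) = T t (G x)"
    "Nlim (at_right 0) (\<lambda>h. (1/h) *\<^sub>R (T (t + h) x - T t x)) (- G (T t x))"
proof -
  have xV: "x \<in> V" using DV x by simp
  define q where "q h = (1 / h) *\<^sub>R (T h x - x)" for h
  have qV: "eventually (\<lambda>h. q h \<in> V) (at_right 0)"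
    using evpos by eventually_elim (use TV xV in \<open>auto simp: q_def intro!: Vscale Vdiff\<close>)
  have ql: "Nlim (at_right 0) q (- G x)" using gen2[OF x] unfolding q_def .
  obtain K where K: "\<forall>y\<in>V. N (T t y) \<le> K * N y" using Tbnd[OF t] by blast
  have GxV: "- G x \<in> V" using GV[OF x] Vminus by simp
  have l1: "Nlim (at_right 0) (\<lambda>h. T t (q h)) (T t (- G x))"
    by (rule Nlim_op[OF ql qV GxV]) (use Tdiff[OF t] K TV[OF t] in auto)
  have e1: "eventually (\<lambda>h. T t (q h) = (1/h) *\<^sub>R (T (t + h) x - T t x)) (at_right 0)"
    using evpos
  proof eventually_elim
    case (elim h)
    have "T (t + h) x = T t (T h x)" using Tsg[OF t _ xV, of h] elim by simp
    moreover have hx: "T h x \<in> V" using TV elim xV by simp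
    moreover have "T h x - x \<in> V" using hx xV Vdiff by simp
    ultimately show ?case unfolding q_def using Tscale[OF t] Tdiff[OF t hx xV] by simp
  qed
  have e2: "eventually (\<lambda>h. T t (q h) = (1/h) *\<^sub>R (T h (T t x) - T t x)) (at_right 0)"
    using e1 evpos
  proof eventually_elim
    case (elim h)
    have "T (h + t) x = T h (T t x)" using Tsg[OF _ t xV, of h] elim by simp
    thus ?case using elim(1) by (simp add: add.commute)
  qed
  have TtxV: "T t x \<in> V" using TV t xV by simp
  have l2: "Nlim (at_right 0) (\<lambda>h. (1/h) *\<^sub>R (T h (T t x) - T t x)) (T t (- G x))"
    using Nlim_cong[OF l1 e2] .
  have TGV: "T t (- G x) \<in> V" using TV[OF t GxV] .
  show TD: "T t x \<in> D" using gen1[OF TtxV] l2 TGV by blast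
  have l3: "Nlim (at_right 0) (\<lambda>h. (1/h) *\<^sub>R (T h (T t x) - T t x)) (- G (T t x))" using gen2[OF TD] .
  have evV: "eventually (\<lambda>h. (1/h) *\<^sub>R (T h (T t x) - T t x) \<in> V) (at_right 0)"
    using evpos by eventually_elim (use TV TtxV in \<open>auto intro!: Vscale Vdiff\<close>)
  have eq: "T t (- G x) = - G (T t x)"
    by (rule Nlim_unique_eq[OF trivial_limit_at_right_real l2 l3 evV TGV]) (use GV TD Vminus in auto)
  thus "G (T t x) = T t (G x)" using Tminus[OF t GV[OF x]] by simp
  show "Nlim (at_right 0) (\<lambda>h. (1/h) *\<^sub>R (T (t + h) x - T t x)) (- G (T t x))"
    using Nlim_cong[OF l1 e1] eq by simp
qed

lemma TD: "x \<in> D \<Longrightarrow> t \<ge> 0 \<Longrightarrow> T t x \<in> D" using right_der by blast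

lemma bound_D:
  assumes x: "x \<in> D" and t: "t \<ge> 0"
  shows "N (T t x) \<le> exp (\<omega> * t) * N x"
proof -
  have xV: "x \<in> V" using DV x by simp
  have "N (T t x)^2 \<le> exp (2 * \<omega> * t) * N (T 0 x)^2"
  proof (rule energy_growth[OF t, where v="\<lambda>s. - G (T s x)"])
    fix s assume s: "0 \<le> s" "s \<le> t"
    show "T s x \<in> V" using TV s xV by simp
    show "((\<lambda>r. N (T r x - T s x)) \<longlongrightarrow> 0) (at s within {0..t})"
      using Tcont[OF xV s(1)] by (rule tendsto_within_subset) auto
  next
    fix s assume s: "0 \<le> s" "s < t"
    have TsD: "T s x \<in> D" using TD x s by simp
    show "- G (T s x) \<in> V \<and> Nlim (at_right 0) (\<lambda>h. (1 / h) *\<^sub>R (T (s + h) x - T s x)) (- G (T s x)) \<and>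
          Re (P (T s x) (- G (T s x))) \<le> \<omega> * (N (T s x))\<^sup>2"
      using right_der(3)[OF x s(1)] GV[OF TsD] Vminus minus2[OF DV[OF TsD] GV[OF TsD]] energy[OF TsD]
      by auto
  qed
  hence "N (T t x)^2 \<le> (exp (\<omega> * t) * N x)^2"
    using T0[OF xV] by (simp add: power_mult_distrib exp_double[symmetric] mult.assoc)
  thus ?thesis using N_nonneg xV by (meson exp_ge_zero mult_nonneg_nonneg power2_le_imp_le)
qed

lemma bound:
  assumes x: "x \<in> V" and t: "t \<ge> 0"
  shows "N (T t x) \<le> exp (\<omega> * t) * N x"
proof (rule field_le_epsilon)
  fix e :: real assume e: "e > 0"
  obtain K where K: "\<forall>y\<in>V. N (T t y) \<le> K * N y" using Tbnd[OF t] by blast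
  define K' where "K' = \<bar>K\<bar> + exp (\<omega> * t) + 1"
  have K'p: "K' > 0" unfolding K'_def using exp_gt_zero[of "\<omega> * t"] abs_ge_zero[of K] by linarith
  obtain y where y: "y \<in> D" "N (x - y) < e / K'" using dense[OF x, of "e / K'"] e K'p by auto
  have yV: "y \<in> V" using DV y by simp
  have xy: "x - y \<in> V" using Vdiff x yV by simp
  have "T t x = T t y + T t (x - y)" using Tadd[OF t yV xy] by simp
  hence "N (T t x) \<le> N (T t y) + N (T t (x - y))" using tri TV t yV xy by simp
  also have "\<dots> \<le> exp (\<omega> * t) * N y + K * N (x - y)" using bound_D[OF y(1) t] K xy by (simp add: add_mono)
  also have "N y \<le> N x + N (x - y)"
    using tri[of x "y - x"] N_diff_comm[OF x yV] x yV Vdiff by simp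
  hence "exp (\<omega> * t) * N y \<le> exp (\<omega> * t) * N x + exp (\<omega> * t) * N (x - y)"
    by (simp add: distrib_left[symmetric])
  hence "exp (\<omega> * t) * N y + K * N (x - y) \<le> exp (\<omega> * t) * N x + K' * N (x - y)"
    unfolding K'_def using N_nonneg[OF xy] by (simp add: algebra_simps) (smt (verit) abs_ge_self mult_right_mono)
  also have "K' * N (x - y) \<le> e" using y(2) K'p by (simp add: field_simps)
  finally show "N (T t x) \<le> exp (\<omega> * t) * N x + e" by simp
qed

lemma left_der:
  assumes x: "x \<in> D" and t: "t > 0"
  shows "Nlim (at_right 0) (\<lambda>h. (1/h) *\<^sub>R (T (t - h) x - T t x)) (G (T t x))"
proof -
  have xV: "x \<in> V" using DV x by simp
  define q where "q h = (1 / h) *\<^sub>R (T h x - x)" for h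
  have ql: "Nlim (at_right 0) q (- G x)" using gen2[OF x] unfolding q_def .
  have GxV: "G x \<in> V" using GV[OF x] by simp
  have evh: "eventually (\<lambda>h. h \<in> {0<..<t}) (at_right (0::real))"
    using eventually_at_right_real[of 0 t] t by simp
  have qV: "h > 0 \<Longrightarrow> q h \<in> V" for h unfolding q_def using TV xV by (auto intro!: Vscale Vdiff)
  define g where "g h = T (t - h) (- G x)" for h
  have gl: "((\<lambda>h. N (g h - T t (- G x))) \<longlongrightarrow> 0) (at_right 0)"
  proof -
    have lim0: "((\<lambda>s. N (T s (- G x) - T t (- G x))) \<longlongrightarrow> 0) (at t within {0..})"
      using Tcont[of "- G x" t] GxV Vminus t by simp
    have fl: "filterlim (\<lambda>h. t - h) (at t within {0..}) (at_right 0)"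
      unfolding filterlim_at
    proof
      show "\<forall>\<^sub>F h in at_right 0. t - h \<in> {0..} \<and> t - h \<noteq> t"
        using evh by eventually_elim auto
      have "((\<lambda>h. t - h) \<longlongrightarrow> t - 0) (at_right (0::real))"
        by (intro tendsto_intros tendsto_ident_at)
      thus "((\<lambda>h. t - h) \<longlongrightarrow> t) (at_right 0)" by simp
    qed
    show ?thesis using filterlim_compose[OF lim0 fl] unfolding g_def by simp
  qed
  have main: "((\<lambda>h. N (T (t - h) (q h) - T t (- G x))) \<longlongrightarrow> 0) (at_right 0)"
  proof (rule tendsto_sandwich[where f="\<lambda>_. 0" and h="\<lambda>h. exp (\<omega> * t) * N (q h - (- G x)) + N (g h - T t (- G x))"])
    show "\<forall>\<^sub>F h in at_right 0. 0 \<le> N (T (t - h) (q h) - T t (- G x))"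
      using evh by eventually_elim (use N_nonneg TV qV GxV Vminus Vdiff t in \<open>auto intro!: N_nonneg Vdiff TV\<close>)
    show "\<forall>\<^sub>F h in at_right 0. N (T (t - h) (q h) - T t (- G x)) \<le> exp (\<omega> * t) * N (q h - (- G x)) + N (g h - T t (- G x))"
      using evh
    proof eventually_elim
      case (elim h)
      have th: "t - h \<ge> 0" using elim by simp
      have mG: "- G x \<in> V" using GxV Vminus by simp
      have qhV: "q h \<in> V" using qV elim by simp
      have qd: "q h - (- G x) \<in> V" using qhV GxV Vadd by simp
      have "T (t - h) (q h) - T t (- G x) = T (t - h) (q h - (- G x)) + (g h - T t (- G x))"
        unfolding g_def using Tdiff[OF th qhV mG] by simp
      hence "N (T (t - h) (q h) - T t (- G x)) \<le> N (T (t - h) (q h - (- G x))) + N (g h - T t (- G x))"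
        using tri TV th qd g_def mG Vdiff t by (metis less_eq_real_def)
      also have "N (T (t - h) (q h - (- G x))) \<le> exp (\<omega> * (t - h)) * N (q h - (- G x))"
        using bound[OF qd th] .
      also have "\<dots> \<le> exp (\<omega> * t) * N (q h - (- G x))"
        using omega elim N_nonneg[OF qd] by (intro mult_right_mono) (auto simp: mult_left_mono)
      finally show ?case by simp
    qed
    have "((\<lambda>h. exp (\<omega> * t) * N (q h - (- G x)) + N (g h - T t (- G x))) \<longlongrightarrow> exp (\<omega> * t) * 0 + 0) (at_right 0)"
      using ql gl unfolding Nlim_def by (intro tendsto_intros)
    thus "((\<lambda>h. exp (\<omega> * t) * N (q h - (- G x)) + N (g h - T t (- G x))) \<longlongrightarrow> 0) (at_right 0)" by simp
  qed simp
  hence l: "Nlim (at_right 0) (\<lambda>h. T (t - h) (q h)) (T t (- G x))" unfolding Nlim_def .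
  have ev: "eventually (\<lambda>h. T (t - h) (q h) \<in> V) (at_right 0)"
    using evh by eventually_elim (use TV qV in auto)
  have TGV: "T t (- G x) \<in> V" using TV t GxV Vminus by simp
  have l': "Nlim (at_right 0) (\<lambda>h. - T (t - h) (q h)) (- T t (- G x))" by (rule Nlim_minus[OF l ev TGV])
  have eq1: "- T t (- G x) = G (T t x)" using right_der(2)[OF x] Tminus GxV t by simp
  have eq2: "eventually (\<lambda>h. - T (t - h) (q h) = (1/h) *\<^sub>R (T (t - h) x - T t x)) (at_right 0)"
    using evh
  proof eventually_elim
    case (elim h)
    have th: "t - h \<ge> 0" "h \<ge> 0" using elim by auto
    have tt: "T t x = T (t - h) (T h x)" using Tsg[OF th xV] by simp
    have hx: "T h x \<in> V" using TV th xV by simp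
    have d: "T h x - x \<in> V" using hx xV Vdiff by simp
    have "T (t - h) (q h) = (1/h) *\<^sub>R (T (t - h) (T h x) - T (t - h) x)"
      unfolding q_def using Tscale[OF th(1) d] Tdiff[OF th(1) hx xV] by simp
    thus ?case unfolding tt by (simp add: algebra_simps)
  qed
  show ?thesis using Nlim_cong[OF l' eq2] eq1 by simp
qed

end


context sip begin

lemma deriv_cont:
  assumes uV: "\<And>s. u s \<in> V" and v: "v \<in> V"
    and d: "Nlim (at 0) (\<lambda>h. (1/h) *\<^sub>R (u (t + h) - u t)) v"
  shows "((\<lambda>r. N (u r - u t)) \<longlongrightarrow> 0) (at t)"
proof -
  define q where "q h = (1/h) *\<^sub>R (u (t + h) - u t)" for h
  have ql: "((\<lambda>h. N (q h - v)) \<longlongrightarrow> 0) (at 0)" using d unfolding Nlim_def q_def .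
  have qV: "q h \<in> V" for h unfolding q_def using uV by (intro Vscale Vdiff)
  have "((\<lambda>h. N (u (h + t) - u t)) \<longlongrightarrow> 0) (at 0)"
  proof (rule tendsto_sandwich[where f="\<lambda>_. 0" and h="\<lambda>h. \<bar>h\<bar> * (N (q h - v) + N v)"])
    show "\<forall>\<^sub>F h in at 0. 0 \<le> N (u (h + t) - u t)" using N_nonneg uV Vdiff by auto
    show "\<forall>\<^sub>F h in at 0. N (u (h + t) - u t) \<le> \<bar>h\<bar> * (N (q h - v) + N v)"
      unfolding eventually_at_filter
    proof (rule always_eventually, intro allI impI)
      fix h :: real assume h: "h \<noteq> 0"
      have "u (h + t) - u t = h *\<^sub>R q h" unfolding q_def using h by (simp add: add.commute)
      hence "N (u (h + t) - u t) = \<bar>h\<bar> * N (q h)" using N_scale qV by simp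
      also have "N (q h) \<le> N (q h - v) + N v" using tri[of "q h - v" v] qV v Vdiff by simp
      hence "\<bar>h\<bar> * N (q h) \<le> \<bar>h\<bar> * (N (q h - v) + N v)" by (simp add: mult_left_mono)
      finally show "N (u (h + t) - u t) \<le> \<bar>h\<bar> * (N (q h - v) + N v)" .
    qed
    have "((\<lambda>h. \<bar>h\<bar> * (N (q h - v) + N v)) \<longlongrightarrow> \<bar>0\<bar> * (0 + N v)) (at (0::real))"
      by (intro tendsto_intros ql)
    thus "((\<lambda>h. \<bar>h\<bar> * (N (q h - v) + N v)) \<longlongrightarrow> 0) (at 0)" by simp
  qed simp
  thus ?thesis unfolding filterlim_at_to_0[of _ _ t] .
qed

lemma energy_deriv:
  assumes uV: "\<And>s. u s \<in> V" and v: "v \<in> V"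
    and d: "Nlim (at 0) (\<lambda>h. (1/h) *\<^sub>R (u (t + h) - u t)) v"
  shows "((\<lambda>s. P (u s) (u s)) has_vector_derivative complex_of_real (2 * Re (P (u t) v))) (at t)"
proof -
  have ql: "((\<lambda>h. (P (u (t + h)) (u (t + h)) - P (u t) (u t)) / of_real h) \<longlongrightarrow> P v (u t) + P (u t) v) (at 0)"
    by (rule quot_lim[OF _ _ uV v _ d]) (auto simp: eventually_at_filter uV intro!: tendsto_ident_at)
  have "((\<lambda>h. Re ((P (u (t + h)) (u (t + h)) - P (u t) (u t)) / of_real h)) \<longlongrightarrow> Re (P v (u t) + P (u t) v)) (at 0)"
    by (rule tendsto_Re[OF ql])
  hence "((\<lambda>h. (Re (P (u (h + t)) (u (h + t))) - Re (P (u t) (u t))) / (h + t - t)) \<longlongrightarrow> 2 * Re (P (u t) v)) (at 0)"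
    using Re_herm[OF uV v] by (simp add: add.commute Re_divide_of_real)
  hence "((\<lambda>y. (Re (P (u y) (u y)) - Re (P (u t) (u t))) / (y - t)) \<longlongrightarrow> 2 * Re (P (u t) v)) (at t)"
    unfolding filterlim_at_to_0[of _ _ t] by simp
  hence re: "((\<lambda>s. Re (P (u s) (u s))) has_real_derivative 2 * Re (P (u t) v)) (at t)"
    using has_field_derivative_iff by blast
  have im: "((\<lambda>s. Im (P (u s) (u s))) has_real_derivative 0) (at t)"
    using Im_self[OF uV] by simp
  show ?thesis unfolding has_vector_derivative_complex_iff using re im by simp
qed

end

context sgp begin

lemma Tcont_left:
  assumes x: "x \<in> V" and t: "t > 0"
  shows "((\<lambda>s. N (T s x - T t x)) \<longlongrightarrow> 0) (at_left t)"
proof -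
  have "((\<lambda>s. N (T s x - T t x)) \<longlongrightarrow> 0) (at t within {0..t})"
    using Tcont[OF x less_imp_le[OF t]] by (rule tendsto_within_subset) auto
  thus ?thesis using at_within_Icc_at_left[OF t] by simp
qed

lemma Tcont_right:
  assumes x: "x \<in> V" and t: "t \<ge> 0"
  shows "((\<lambda>s. N (T s x - T t x)) \<longlongrightarrow> 0) (at_right t)"
  using Tcont[OF x t] by (rule tendsto_within_subset) (use t in auto)

lemma ode_zero_fwd:
  assumes wD: "\<And>t. w t \<in> D"
    and d: "\<And>t. Nlim (at 0) (\<lambda>h. (1/h) *\<^sub>R (w (t + h) - w t)) (c *\<^sub>R G (w t))"
    and c: "\<bar>c\<bar> = 1"
    and w0: "w t0 = 0" and s: "s \<ge> 0"
  shows "w (t0 + s) = 0"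
proof -
  have wV: "w t \<in> V" for t using DV wD by simp
  have cGV: "c *\<^sub>R G (w t) \<in> V" for t using GV wD Vscale by simp
  have "N (w (t0 + s))^2 \<le> exp (2 * \<omega> * s) * N (w (t0 + 0))^2"
  proof (rule energy_growth[OF s, where v="\<lambda>r. c *\<^sub>R G (w (t0 + r))"])
    fix r assume r: "0 \<le> r" "r \<le> s"
    show "w (t0 + r) \<in> V" using wV by simp
    have "((\<lambda>y. N (w y - w (t0 + r))) \<longlongrightarrow> 0) (at (t0 + r))"
      by (rule deriv_cont[OF wV cGV d])
    hence "((\<lambda>y. N (w (t0 + y) - w (t0 + r))) \<longlongrightarrow> 0) (at r)"
      unfolding filterlim_at_to_0[of _ _ r] filterlim_at_to_0[of _ _ "t0 + r"] by (simp add: add.commute add.left_commute)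
    thus "((\<lambda>y. N (w (t0 + y) - w (t0 + r))) \<longlongrightarrow> 0) (at r within {0..s})"
      by (rule tendsto_within_subset) auto
  next
    fix r assume r: "0 \<le> r" "r < s"
    have "Nlim (at_right 0) (\<lambda>h. (1/h) *\<^sub>R (w (t0 + r + h) - w (t0 + r))) (c *\<^sub>R G (w (t0 + r)))"
      using d[of "t0 + r"] unfolding Nlim_def by (rule tendsto_within_subset) auto
    moreover have "Re (P (w (t0 + r)) (c *\<^sub>R G (w (t0 + r)))) \<le> \<omega> * N (w (t0 + r))^2"
    proof -
      have "Re (P (w (t0 + r)) (c *\<^sub>R G (w (t0 + r)))) = c * Re (P (w (t0 + r)) (G (w (t0 + r))))"
        using scale2 wV GV wD by simp
      also have "\<dots> \<le> \<bar>c * Re (P (w (t0 + r)) (G (w (t0 + r))))\<bar>" by simp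
      also have "\<dots> = \<bar>Re (P (w (t0 + r)) (G (w (t0 + r))))\<bar>" using c by (simp add: abs_mult)
      also have "\<dots> \<le> \<omega> * N (w (t0 + r))^2" using energy wD by simp
      finally show ?thesis .
    qed
    ultimately show "c *\<^sub>R G (w (t0 + r)) \<in> V \<and>
         Nlim (at_right 0) (\<lambda>h. (1 / h) *\<^sub>R (w (t0 + (r + h)) - w (t0 + r))) (c *\<^sub>R G (w (t0 + r))) \<and>
         Re (P (w (t0 + r)) (c *\<^sub>R G (w (t0 + r)))) \<le> \<omega> * (N (w (t0 + r)))\<^sup>2"
      using cGV by (simp add: add.assoc)
  qed
  hence "N (w (t0 + s))^2 \<le> 0" using w0 by simp
  hence "N (w (t0 + s)) = 0" by simp
  thus ?thesis using definite wV by blast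
qed

lemma ode_zero:
  assumes wD: "\<And>t. w t \<in> D"
    and d: "\<And>t. Nlim (at 0) (\<lambda>h. (1/h) *\<^sub>R (w (t + h) - w t)) (- G (w t))"
    and w0: "w t0 = 0"
  shows "w t = 0"
proof (cases "t \<ge> t0")
  case True
  have "w (t0 + (t - t0)) = 0"
    by (rule ode_zero_fwd[of w "-1"]) (use wD d w0 True in auto)
  thus ?thesis by simp
next
  case False
  define w' where "w' s = w (- s)" for s
  have d': "Nlim (at 0) (\<lambda>h. (1/h) *\<^sub>R (w' (s + h) - w' s)) (1 *\<^sub>R G (w' s))" for s
  proof -
    have wV: "w y \<in> V" for y using DV wD by simp
    have l: "Nlim (at 0) (\<lambda>h. (1/h) *\<^sub>R (w (- s + h) - w (- s))) (- G (w (- s)))" using d .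
    have GV': "G (w (- s)) \<in> V" using GV wD by simp
    have l2: "Nlim (at 0) (\<lambda>h. - ((1/h) *\<^sub>R (w (- s + h) - w (- s)))) (- (- G (w (- s))))"
      by (rule Nlim_minus[OF l]) (use wV GV' Vminus in \<open>auto intro!: always_eventually Vscale Vdiff wV\<close>)
    have "((\<lambda>h. N (- ((1/h) *\<^sub>R (w (- s + h) - w (- s))) - (- (- G (w (- s)))))) \<longlongrightarrow> 0) (at 0)"
      using l2 unfolding Nlim_def .
    hence "((\<lambda>h. N (- ((1/h) *\<^sub>R (w (- s + h) - w (- s))) - (- (- G (w (- s)))))) \<longlongrightarrow> 0) (filtermap uminus (at 0))"
      using filtermap_at_minus[of "0::real"] by simp
    hence "((\<lambda>h. N (- ((1/(- h)) *\<^sub>R (w (- s + - h) - w (- s))) - (- (- G (w (- s)))))) \<longlongrightarrow> 0) (at 0)"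
      unfolding filterlim_filtermap by simp
    thus ?thesis unfolding Nlim_def w'_def by (simp add: algebra_simps)
  qed
  have "w' (- t0 + (t0 - t)) = 0"
    by (rule ode_zero_fwd[of w' 1]) (use wD d' w0 False in \<open>auto simp: w'_def\<close>)
  thus ?thesis unfolding w'_def by simp
qed

end

lemma (in absY) inv_D:
  assumes A: "sgp V P Jv D Ta Ga \<omega>" and B: "sgp V P Jv D Tb Gb \<omega>"
    and GG: "\<And>x. x \<in> D \<Longrightarrow> Gb x = - Ga x"
    and x: "x \<in> D" and t: "t \<ge> 0"
  shows "Tb t (Ta t x) = x"
proof (cases "t = 0")
  case True
  thus ?thesis using sgp.T0[OF A] sgp.T0[OF B] sgp.TV[OF A] DV x by simp
next
  case False
  hence tp: "t > 0" using t by simp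
  have xV: "x \<in> V" using DV x by simp
  define y where "y = Ta t x"
  have yD: "y \<in> D" unfolding y_def using sgp.TD[OF A x t] .
  have yV: "y \<in> V" using DV yD by simp
  define w where "w s = Ta (t - s) x - Tb s y" for s
  have TaD: "s \<le> t \<Longrightarrow> Ta (t - s) x \<in> D" for s using sgp.TD[OF A x] by simp
  have TbD: "s \<ge> 0 \<Longrightarrow> Tb s y \<in> D" for s using sgp.TD[OF B yD] by simp
  have wD: "0 \<le> s \<Longrightarrow> s \<le> t \<Longrightarrow> w s \<in> D" for s unfolding w_def using TaD TbD Ddiff by simp
  have "N (w t)^2 \<le> exp (2 * \<omega> * t) * N (w 0)^2"
  proof (rule energy_growth[OF t, where v="\<lambda>s. Ga (w s)"])
    fix s assume s: "0 \<le> s" "s \<le> t"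
    show "w s \<in> V" using wD[OF s] DV by simp
    have c1: "((\<lambda>r. N (Ta (t - r) x - Ta (t - s) x)) \<longlongrightarrow> 0) (at s within {0..t})"
    proof -
      have l: "((\<lambda>r. N (Ta r x - Ta (t - s) x)) \<longlongrightarrow> 0) (at (t - s) within {0..})"
        using sgp.Tcont[OF A xV] s by simp
      have fl: "filterlim (\<lambda>r. t - r) (at (t - s) within {0..}) (at s within {0..t})"
        unfolding filterlim_at
      proof
        show "\<forall>\<^sub>F r in at s within {0..t}. t - r \<in> {0..} \<and> t - r \<noteq> t - s"
          by (auto simp: eventually_at_filter)
        have "((\<lambda>r. t - r) \<longlongrightarrow> t - s) (at s within {0..t})" by (intro tendsto_intros)
        thus "((\<lambda>r. t - r) \<longlongrightarrow> t - s) (at s within {0..t})" .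
      qed
      show ?thesis using filterlim_compose[OF l fl] by simp
    qed
    have c2: "((\<lambda>r. N (Tb r y - Tb s y)) \<longlongrightarrow> 0) (at s within {0..t})"
      using sgp.Tcont[OF B yV s(1)] by (rule tendsto_within_subset) auto
    show "((\<lambda>r. N (w r - w s)) \<longlongrightarrow> 0) (at s within {0..t})"
    proof (rule tendsto_sandwich[where f="\<lambda>_. 0" and h="\<lambda>r. N (Ta (t - r) x - Ta (t - s) x) + N (Tb r y - Tb s y)"])
      show "\<forall>\<^sub>F r in at s within {0..t}. 0 \<le> N (w r - w s)"
        using ev_within by eventually_elim (use wD s DV Vdiff N_nonneg in \<open>auto\<close>)
      show "\<forall>\<^sub>F r in at s within {0..t}. N (w r - w s) \<le> N (Ta (t - r) x - Ta (t - s) x) + N (Tb r y - Tb s y)"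
        using ev_within
      proof eventually_elim
        case (elim r)
        have m: "Ta (t - r) x \<in> V" "Ta (t - s) x \<in> V" "Tb r y \<in> V" "Tb s y \<in> V"
          using TaD TbD DV elim s by auto
        have "w r - w s = (Ta (t - r) x - Ta (t - s) x) + (- (Tb r y - Tb s y))"
          unfolding w_def by (simp add: algebra_simps)
        hence "N (w r - w s) \<le> N (Ta (t - r) x - Ta (t - s) x) + N (- (Tb r y - Tb s y))"
          using tri m Vdiff Vminus by metis
        thus ?case using N_minus m Vdiff N_diff_comm[of "Tb r y" "Tb s y"] by simp
      qed
      show "((\<lambda>r. N (Ta (t - r) x - Ta (t - s) x) + N (Tb r y - Tb s y)) \<longlongrightarrow> 0) (at s within {0..t})"
        using tendsto_add[OF c1 c2] by simp
    qed simp
  next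
    fix s assume s: "0 \<le> s" "s < t"
    have ts: "t - s > 0" using s by simp
    have l1: "Nlim (at_right 0) (\<lambda>h. (1/h) *\<^sub>R (Ta (t - s - h) x - Ta (t - s) x)) (Ga (Ta (t - s) x))"
      using sgp.left_der[OF A x ts] .
    have l2: "Nlim (at_right 0) (\<lambda>h. (1/h) *\<^sub>R (Tb (s + h) y - Tb s y)) (- Gb (Tb s y))"
      using sgp.right_der(3)[OF B yD s(1)] .
    have evp: "eventually (\<lambda>h. h \<in> {0<..<t - s}) (at_right (0::real))"
      using eventually_at_right_real[of 0 "t - s"] ts by simp
    have m1: "Ga (Ta (t - s) x) \<in> V" using sgp.GV[OF A] TaD s by simp
    have m2: "- Gb (Tb s y) \<in> V" using sgp.GV[OF B] TbD s Vminus by simp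
    have l3: "Nlim (at_right 0) (\<lambda>h. (1/h) *\<^sub>R (Ta (t - s - h) x - Ta (t - s) x) - (1/h) *\<^sub>R (Tb (s + h) y - Tb s y))
                (Ga (Ta (t - s) x) - - Gb (Tb s y))"
    proof (rule Nlim_diff[OF l1 l2 _ m1 m2])
      show "\<forall>\<^sub>F h in at_right 0. (1/h) *\<^sub>R (Ta (t - s - h) x - Ta (t - s) x) \<in> V \<and> (1/h) *\<^sub>R (Tb (s + h) y - Tb s y) \<in> V"
        using evp by eventually_elim (use TaD TbD DV s sgp.TV[OF A _ xV] sgp.TV[OF B _ yV] in \<open>auto intro!: Vscale Vdiff\<close>)
    qed
    have eqv: "Ga (Ta (t - s) x) - - Gb (Tb s y) = Ga (w s)"
      unfolding w_def using GG[OF TbD[OF s(1)]] sgp.Gdiff[OF A TaD[of s] TbD[OF s(1)]] s by simp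
    have l4: "Nlim (at_right 0) (\<lambda>h. (1/h) *\<^sub>R (w (s + h) - w s)) (Ga (w s))"
      using l3 unfolding eqv w_def by (simp add: algebra_simps diff_diff_eq)
    have en: "Re (P (w s) (Ga (w s))) \<le> \<omega> * N (w s)^2"
      using sgp.energy[OF A wD[of s]] s by simp
    show "Ga (w s) \<in> V \<and> Nlim (at_right 0) (\<lambda>h. (1 / h) *\<^sub>R (w (s + h) - w s)) (Ga (w s)) \<and>
          Re (P (w s) (Ga (w s))) \<le> \<omega> * N (w s)^2"
      using sgp.GV[OF A wD[of s]] s l4 en by simp
  qed
  moreover have "w 0 = 0" unfolding w_def y_def using sgp.T0[OF B] sgp.TV[OF A t xV] by simp
  ultimately have "N (w t)^2 \<le> 0" by simp
  hence "N (w t) = 0" by simp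
  hence "w t = 0" using definite wD[of t] t DV by simp
  hence "Ta 0 x = Tb t y" unfolding w_def by simp
  hence "x = Tb t y" using sgp.T0[OF A xV] by simp
  thus ?thesis unfolding y_def by (rule sym)
qed


lemma (in absY) inv_V:
  assumes A: "sgp V P Jv D Ta Ga \<omega>" and B: "sgp V P Jv D Tb Gb \<omega>"
    and GG: "\<And>x. x \<in> D \<Longrightarrow> Gb x = - Ga x"
    and x: "x \<in> V" and t: "t \<ge> 0"
  shows "Tb t (Ta t x) = x"
proof -
  define F where "F z = Tb t (Ta t z) - z" for z
  have FV: "z \<in> V \<Longrightarrow> F z \<in> V" for z unfolding F_def using sgp.TV[OF A t] sgp.TV[OF B t] Vdiff by simp
  have Fdiff: "z1 \<in> V \<Longrightarrow> z2 \<in> V \<Longrightarrow> F (z1 - z2) = F z1 - F z2" for z1 z2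
    unfolding F_def using sgp.Tdiff[OF A t] sgp.Tdiff[OF B t] sgp.TV[OF A t] by simp
  have Fb: "z \<in> V \<Longrightarrow> N (F z) \<le> (exp (\<omega> * t) * exp (\<omega> * t) + 1) * N z" for z
  proof -
    assume z: "z \<in> V"
    have a: "Ta t z \<in> V" "Tb t (Ta t z) \<in> V" using sgp.TV[OF A t z] sgp.TV[OF B t] by auto
    have "N (F z) \<le> N (Tb t (Ta t z)) + N z" unfolding F_def
      using tri[of "Tb t (Ta t z)" "- z"] a z Vminus N_minus by simp
    also have "N (Tb t (Ta t z)) \<le> exp (\<omega> * t) * N (Ta t z)" using sgp.bound[OF B a(1) t] .
    also have "\<dots> \<le> exp (\<omega> * t) * (exp (\<omega> * t) * N z)"
      using sgp.bound[OF A z t] by (simp add: mult_left_mono)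
    finally show ?thesis by (simp add: algebra_simps)
  qed
  have "N (F x) \<le> 0"
  proof (rule field_le_epsilon)
    fix e :: real assume e: "e > 0"
    define C where "C = exp (\<omega> * t) * exp (\<omega> * t) + 1"
    have C: "C > 0" unfolding C_def by (simp add: add_pos_pos)
    obtain y where y: "y \<in> D" "N (x - y) < e / C" using dense[OF x, of "e / C"] e C by auto
    have yV: "y \<in> V" using DV y by simp
    have Fy: "F y = 0" unfolding F_def using inv_D[OF A B GG y(1) t] by simp
    have "F x = F (x - y)" using Fdiff[OF x yV] Fy by simp
    hence "N (F x) \<le> C * N (x - y)" using Fb[of "x - y"] x yV Vdiff unfolding C_def by simp
    also have "\<dots> \<le> e" using y(2) C by (simp add: field_simps)
    finally show "N (F x) \<le> 0 + e" by simp
  qed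
  hence "N (F x) = 0" using N_nonneg[OF FV[OF x]] by simp
  hence "F x = 0" using definite FV x by simp
  thus ?thesis unfolding F_def by simp
qed


locale grp = absY V P Jv D for V :: "'b::real_vector set" and P Jv D +
  fixes T1 T2 :: "real \<Rightarrow> 'b \<Rightarrow> 'b" and G :: "'b \<Rightarrow> 'b" and \<omega> :: real
  assumes A: "sgp V P Jv D T1 G \<omega>" and B: "sgp V P Jv D T2 (\<lambda>x. - G x) \<omega>"
begin

definition U where "U t = (if 0 \<le> t then T1 t else T2 (- t))"

lemma inv12: "x \<in> V \<Longrightarrow> t \<ge> 0 \<Longrightarrow> T2 t (T1 t x) = x"
  by (rule inv_V[OF A B]) auto

lemma inv21: "x \<in> V \<Longrightarrow> t \<ge> 0 \<Longrightarrow> T1 t (T2 t x) = x"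
  by (rule inv_V[OF B A]) auto

lemma T1V: "t \<ge> 0 \<Longrightarrow> x \<in> V \<Longrightarrow> T1 t x \<in> V" using sgp.TV[OF A] .
lemma T2V: "t \<ge> 0 \<Longrightarrow> x \<in> V \<Longrightarrow> T2 t x \<in> V" using sgp.TV[OF B] .

lemma UV: "x \<in> V \<Longrightarrow> U t x \<in> V" unfolding U_def using T1V T2V by auto

lemma Uadd: "x \<in> V \<Longrightarrow> y \<in> V \<Longrightarrow> U t (x + y) = U t x + U t y"
  unfolding U_def using sgp.Tadd[OF A] sgp.Tadd[OF B] by auto

lemma Uscale: "x \<in> V \<Longrightarrow> U t (r *\<^sub>R x) = r *\<^sub>R U t x"
  unfolding U_def using sgp.Tscale[OF A] sgp.Tscale[OF B] by auto

lemma Udiff: "x \<in> V \<Longrightarrow> y \<in> V \<Longrightarrow> U t (x - y) = U t x - U t y"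
  unfolding U_def using sgp.Tdiff[OF A] sgp.Tdiff[OF B] by auto

lemma Ubnd: "\<exists>K. \<forall>x\<in>V. N (U t x) \<le> K * N x"
  unfolding U_def using sgp.Tbnd[OF A] sgp.Tbnd[OF B] by (cases "0 \<le> t") auto

lemma U0: "x \<in> V \<Longrightarrow> U 0 x = x" unfolding U_def using sgp.T0[OF A] by simp

lemma Ugroup:
  assumes x: "x \<in> V"
  shows "U (s + t) x = U s (U t x)"
proof (cases "0 \<le> s")
  case s: True
  show ?thesis
  proof (cases "0 \<le> t")
    case t: True
    thus ?thesis unfolding U_def using s sgp.Tsg[OF A s t x] by simp
  next
    case t: False
    define y where "y = T2 (- t) x"
    have yV: "y \<in> V" unfolding y_def using T2V t x by simp
    show ?thesis
    proof (cases "0 \<le> s + t")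
      case st: True
      have "T1 s y = T1 ((s + t) + (- t)) y" by simp
      also have "\<dots> = T1 (s + t) (T1 (- t) y)" using sgp.Tsg[OF A st, of "- t" y] t yV by simp
      also have "T1 (- t) y = x" unfolding y_def using inv21 x t by simp
      finally show ?thesis unfolding U_def using s t st y_def by simp
    next
      case st: False
      have "T2 (- t) x = T2 (s + (- s - t)) x" by simp
      also have "\<dots> = T2 s (T2 (- s - t) x)" using sgp.Tsg[OF B s, of "- s - t" x] st x by simp
      finally have "T1 s (T2 (- t) x) = T2 (- s - t) x" using inv21[OF T2V[OF _ x]] s st by simp
      thus ?thesis unfolding U_def using s t st by simp
    qed
  qed
next
  case s: False
  show ?thesis
  proof (cases "0 \<le> t")
    case t: True
    show ?thesis
    proof (cases "0 \<le> s + t")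
      case st: True
      have "T1 t x = T1 (- s + (s + t)) x" by simp
      also have "\<dots> = T1 (- s) (T1 (s + t) x)" using sgp.Tsg[OF A _ st x, of "- s"] s by simp
      finally have "T2 (- s) (T1 t x) = T1 (s + t) x" using inv12[OF T1V[OF st x]] s by simp
      thus ?thesis unfolding U_def using s t st by simp
    next
      case st: False
      have "T2 (- s) (T1 t x) = T2 ((- s - t) + t) (T1 t x)" by simp
      also have "\<dots> = T2 (- s - t) (T2 t (T1 t x))" using sgp.Tsg[OF B _ t T1V[OF t x], of "- s - t"] st by simp
      also have "T2 t (T1 t x) = x" using inv12 x t by simp
      finally show ?thesis unfolding U_def using s t st by simp
    qed
  next
    case t: False
    have "T2 (- s - t) x = T2 (- s + - t) x" by simp
    also have "\<dots> = T2 (- s) (T2 (- t) x)" using sgp.Tsg[OF B _ _ x, of "- s" "- t"] s t by simp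
    finally show ?thesis unfolding U_def using s t by simp
  qed
qed

lemma Ucont:
  assumes x: "x \<in> V"
  shows "((\<lambda>s. N (U s x - U t x)) \<longlongrightarrow> 0) (at t)"
proof (rule filterlim_split_at_real)
  show "((\<lambda>s. N (U s x - U t x)) \<longlongrightarrow> 0) (at_right t)"
  proof (cases "t \<ge> 0")
    case True
    have l: "((\<lambda>s. N (T1 s x - T1 t x)) \<longlongrightarrow> 0) (at_right t)" using sgp.Tcont_right[OF A x True] .
    have "eventually (\<lambda>s. N (T1 s x - T1 t x) = N (U s x - U t x)) (at_right t)"
      using eventually_at_right_real[OF less_add_one] by eventually_elim (use True in \<open>auto simp: U_def\<close>)
    thus ?thesis using tendsto_cong l by fastforce
  next
    case False
    have l: "((\<lambda>s. N (T2 s x - T2 (- t) x)) \<longlongrightarrow> 0) (at_left (- t))" using sgp.Tcont_left[OF B x] False by simp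
    hence l': "((\<lambda>s. N (T2 (- s) x - T2 (- t) x)) \<longlongrightarrow> 0) (at_right t)"
      unfolding at_right_minus[of t] filterlim_filtermap by simp
    have "eventually (\<lambda>s. N (T2 (- s) x - T2 (- t) x) = N (U s x - U t x)) (at_right t)"
    proof -
      have t0: "t < 0" using False by simp
      show ?thesis using eventually_at_right_real[OF t0] by eventually_elim (auto simp: U_def)
    qed
    thus ?thesis using tendsto_cong l' by fastforce
  qed
  show "((\<lambda>s. N (U s x - U t x)) \<longlongrightarrow> 0) (at_left t)"
  proof (cases "t > 0")
    case True
    have l: "((\<lambda>s. N (T1 s x - T1 t x)) \<longlongrightarrow> 0) (at_left t)" using sgp.Tcont_left[OF A x True] .
    have "eventually (\<lambda>s. N (T1 s x - T1 t x) = N (U s x - U t x)) (at_left t)"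
      using eventually_at_left_real[OF True] by eventually_elim (auto simp: U_def)
    thus ?thesis using tendsto_cong l by fastforce
  next
    case False
    have l: "((\<lambda>s. N (T2 s x - T2 (- t) x)) \<longlongrightarrow> 0) (at_right (- t))" using sgp.Tcont_right[OF B x] False by simp
    have Ut: "U t x = T2 (- t) x" unfolding U_def using False sgp.T0[OF A x] sgp.T0[OF B x] by auto
    have "eventually (\<lambda>s. N (T2 s x - T2 (- t) x) = N (U (- s) x - U t x)) (at_right (- t))"
    proof -
      have "eventually (\<lambda>s. s > - t) (at_right (- t))" by (simp add: eventually_at_filter)
      thus ?thesis by eventually_elim (use False sgp.T0[OF A x] sgp.T0[OF B x] in \<open>auto simp: U_def Ut\<close>)
    qed
    hence "((\<lambda>s. N (U (- s) x - U t x)) \<longlongrightarrow> 0) (at_right (- t))" using tendsto_cong l by fastforce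
    thus ?thesis unfolding filterlim_at_left_to_right[of _ _ t] .
  qed
qed

lemma UD: "x \<in> D \<Longrightarrow> U t x \<in> D"
  unfolding U_def using sgp.TD[OF A] sgp.TD[OF B] by auto

lemma UG: "x \<in> D \<Longrightarrow> G (U t x) = U t (G x)"
proof -
  assume x: "x \<in> D"
  show ?thesis
  proof (cases "0 \<le> t")
    case True thus ?thesis unfolding U_def using sgp.right_der(2)[OF A x True] by simp
  next
    case False
    have "- G (T2 (- t) x) = T2 (- t) (- G x)" using sgp.right_der(2)[OF B x] False by simp
    thus ?thesis unfolding U_def using False sgp.Tminus[OF B _ sgp.GV[OF A x]] by simp
  qed
qed

lemma Ugen:
  assumes x: "x \<in> D"
  shows "Nlim (at 0) (\<lambda>h. (1/h) *\<^sub>R (U h x - x)) (- G x)"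
  unfolding Nlim_def
proof (rule filterlim_split_at_real)
  have xV: "x \<in> V" using DV x by simp
  have l: "((\<lambda>h. N ((1/h) *\<^sub>R (T1 h x - x) - - G x)) \<longlongrightarrow> 0) (at_right 0)"
    using sgp.gen2[OF A x] unfolding Nlim_def .
  have "eventually (\<lambda>h. N ((1/h) *\<^sub>R (T1 h x - x) - - G x) = N ((1/h) *\<^sub>R (U h x - x) - - G x)) (at_right 0)"
    using eventually_at_right_real[OF zero_less_one] by eventually_elim (auto simp: U_def)
  thus "((\<lambda>h. N ((1/h) *\<^sub>R (U h x - x) - - G x)) \<longlongrightarrow> 0) (at_right 0)" using tendsto_cong l by fastforce
  have l2: "((\<lambda>h. N ((1/h) *\<^sub>R (T2 h x - x) - - (- G x))) \<longlongrightarrow> 0) (at_right 0)"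
    using sgp.gen2[OF B x] unfolding Nlim_def .
  have "eventually (\<lambda>h. N ((1/h) *\<^sub>R (T2 h x - x) - - (- G x)) = N ((1 / - h) *\<^sub>R (U (- h) x - x) - - G x)) (at_right 0)"
    using eventually_at_right_real[OF zero_less_one]
  proof eventually_elim
    case (elim h)
    have m: "(1/h) *\<^sub>R (T2 h x - x) - - (- G x) \<in> V"
      using elim T2V xV sgp.GV[OF A x] by (auto intro!: Vdiff Vscale Vminus)
    have Uh: "U (- h) x = T2 h x" using elim by (simp add: U_def)
    have eq: "(1 / - h) *\<^sub>R (U (- h) x - x) - - G x = - ((1/h) *\<^sub>R (T2 h x - x) - - (- G x))"
      unfolding Uh by (simp add: algebra_simps)
    show ?case unfolding eq by (rule N_minus[OF m, symmetric])
  qed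
  hence "((\<lambda>h. N ((1 / - h) *\<^sub>R (U (- h) x - x) - - G x)) \<longlongrightarrow> 0) (at_right 0)" using tendsto_cong l2 by fastforce
  thus "((\<lambda>h. N ((1/h) *\<^sub>R (U h x - x) - - G x)) \<longlongrightarrow> 0) (at_left 0)"
    unfolding filterlim_at_left_to_right[of _ _ 0] by simp
qed

lemma Uder:
  assumes x: "x \<in> D"
  shows "Nlim (at 0) (\<lambda>h. (1/h) *\<^sub>R (U (r + h) x - U r x)) (- G (U r x))"
proof -
  have xV: "x \<in> V" using DV x by simp
  obtain K where K: "\<forall>y\<in>V. N (U r y) \<le> K * N y" using Ubnd by blast
  have qV: "eventually (\<lambda>h. (1/h) *\<^sub>R (U h x - x) \<in> V) (at 0)"
    using UV xV by (auto intro!: always_eventually Vscale Vdiff)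
  have GxV: "- G x \<in> V" using sgp.GV[OF A x] Vminus by simp
  have l: "Nlim (at 0) (\<lambda>h. U r ((1/h) *\<^sub>R (U h x - x))) (U r (- G x))"
    by (rule Nlim_op[OF Ugen[OF x] qV GxV]) (use Udiff K UV in auto)
  have eq: "U r ((1/h) *\<^sub>R (U h x - x)) = (1/h) *\<^sub>R (U (r + h) x - U r x)" for h
    using Uscale Udiff UV xV Vdiff Ugroup[OF xV, of r h] by simp
  have eq2: "U r (- G x) = - G (U r x)"
    using UG[OF x] Uscale[of "G x" r "-1"] sgp.GV[OF A x] by simp
  show ?thesis using l unfolding eq eq2 .
qed

lemma ode_exists_unique:
  assumes x: "x \<in> D"
  shows "\<exists>!u. u t0 = x \<and> (\<forall>t. u t \<in> D \<and> Nlim (at 0) (\<lambda>h. (1/h) *\<^sub>R (u (t + h) - u t)) (- G (u t)))"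
proof (rule ex_ex1I)
  have xV: "x \<in> V" using DV x by simp
  define u where "u t = U (t - t0) x" for t
  have "u t0 = x" unfolding u_def using U0 xV by simp
  moreover have "u t \<in> D \<and> Nlim (at 0) (\<lambda>h. (1/h) *\<^sub>R (u (t + h) - u t)) (- G (u t))" for t
  proof -
    have e: "t + h - t0 = (t - t0) + h" for h by simp
    show ?thesis unfolding u_def e using UD[OF x] Uder[OF x, of "t - t0"] by simp
  qed
  ultimately show "\<exists>u. u t0 = x \<and> (\<forall>t. u t \<in> D \<and> Nlim (at 0) (\<lambda>h. (1/h) *\<^sub>R (u (t + h) - u t)) (- G (u t)))"
    by blast
next
  fix u1 u2
  assume h1: "u1 t0 = x \<and> (\<forall>t. u1 t \<in> D \<and> Nlim (at 0) (\<lambda>h. (1/h) *\<^sub>R (u1 (t + h) - u1 t)) (- G (u1 t)))"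
    and h2: "u2 t0 = x \<and> (\<forall>t. u2 t \<in> D \<and> Nlim (at 0) (\<lambda>h. (1/h) *\<^sub>R (u2 (t + h) - u2 t)) (- G (u2 t)))"
  define w where "w t = u1 t - u2 t" for t
  have wD: "w t \<in> D" for t unfolding w_def using h1 h2 Ddiff by simp
  have d: "Nlim (at 0) (\<lambda>h. (1/h) *\<^sub>R (w (t + h) - w t)) (- G (w t))" for t
  proof -
    have m: "u1 s \<in> V" "u2 s \<in> V" for s using h1 h2 DV by auto
    have l: "Nlim (at 0) (\<lambda>h. (1/h) *\<^sub>R (u1 (t + h) - u1 t) - (1/h) *\<^sub>R (u2 (t + h) - u2 t)) (- G (u1 t) - - G (u2 t))"
      by (rule Nlim_diff) (use h1 h2 m sgp.GV[OF A] in \<open>auto intro!: always_eventually Vscale Vdiff Vminus\<close>)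
    have eqG: "- G (u1 t) - - G (u2 t) = - G (w t)" unfolding w_def using sgp.Gdiff[OF A] h1 h2 by simp
    have fe: "(\<lambda>h. (1/h) *\<^sub>R (u1 (t + h) - u1 t) - (1/h) *\<^sub>R (u2 (t + h) - u2 t)) = (\<lambda>h. (1/h) *\<^sub>R (w (t + h) - w t))"
      by (rule ext) (simp add: w_def algebra_simps)
    show ?thesis using l unfolding fe eqG .
  qed
  have "w t = 0" for t by (rule sgp.ode_zero[OF A wD d, of t0]) (use h1 h2 w_def in simp)
  thus "u1 = u2" unfolding w_def by (simp add: fun_eq_iff)
qed

end


lemma quad_zero:
  fixes a b :: real
  assumes a: "a \<ge> 0" and q: "\<And>t. 2 * t * b \<le> t^2 * a"
  shows "b = 0"
proof -
  define t where "t = b / (a + 1)"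
  have a1: "a + 1 > 0" using a by simp
  have bt: "b = t * (a + 1)" unfolding t_def using a1 by simp
  have "2 * t * (t * (a + 1)) \<le> t^2 * a" using q[of t] bt by simp
  hence "t^2 * (a + 2) \<le> 0" by (simp add: power2_eq_square algebra_simps)
  hence "t^2 \<le> 0" using a by (simp add: mult_le_0_iff)
  hence "t = 0" by simp
  thus ?thesis using bt by simp
qed

context sip begin

lemma parallelogram:
  assumes "a \<in> V" "b \<in> V"
  shows "N (a - b)^2 + N (a + b)^2 = 2 * N a^2 + 2 * N b^2"
proof -
  have "N (a + b)^2 = Re (P a a) + 2 * 1 * Re (P a b) + 1^2 * Re (P b b)"
    using quad_expand[OF assms, of 1] N_sq[OF Vadd[OF assms]] by simp
  moreover have "N (a - b)^2 = Re (P a a) + 2 * (-1) * Re (P a b) + (-1)^2 * Re (P b b)"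
    using quad_expand[OF assms, of "-1"] N_sq[OF Vdiff[OF assms]] by simp
  ultimately show ?thesis using N_sq assms by simp
qed

end

locale hilb = sip "UNIV :: 'b::real_vector set" P Jv for P Jv +
  assumes definiteX: "N x = 0 \<Longrightarrow> x = 0"
    and complete: "(\<And>e. e > 0 \<Longrightarrow> \<exists>M. \<forall>m\<ge>M. \<forall>n\<ge>M. N (f m - f n) < e) \<Longrightarrow> \<exists>l. (\<lambda>n. N (f n - l)) \<longlonglongrightarrow> 0"
begin

lemma cauchy_seq:
  assumes "\<And>m n. N (f m - f n)^2 \<le> 2 / (real m + 1) + 2 / (real n + 1)"
  shows "\<exists>l. (\<lambda>n. N (f n - l)) \<longlonglongrightarrow> 0"
proof (rule complete)
  fix e :: real assume e: "e > 0"
  obtain M :: nat where M: "4 / e^2 < real M" using reals_Archimedean2 by blast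
  show "\<exists>M. \<forall>m\<ge>M. \<forall>n\<ge>M. N (f m - f n) < e"
  proof (intro exI allI impI)
    fix m n assume mn: "M \<le> m" "M \<le> n"
    have "2 / (real m + 1) \<le> 2 / (real M + 1)" using mn by (simp add: frac_le)
    moreover have "2 / (real n + 1) \<le> 2 / (real M + 1)" using mn by (simp add: frac_le)
    moreover have "4 / (real M + 1) < e^2"
    proof -
      have "4 / e^2 < real M + 1" using M by simp
      thus ?thesis using e by (simp add: field_simps)
    qed
    ultimately have "N (f m - f n)^2 < e^2" using assms[of m n] by simp
    thus "N (f m - f n) < e" using e N_nonneg by (meson UNIV_I power_less_imp_less_base less_le)
  qed
qed

lemma lim_P2:
  assumes "(\<lambda>n. N (f n - l)) \<longlonglongrightarrow> 0"
  shows "(\<lambda>n. P u (f n)) \<longlonglongrightarrow> P u l"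
proof -
  have "(\<lambda>n. P u (f n) - P u l) \<longlonglongrightarrow> 0"
  proof (rule Lim_null_comparison)
    show "\<forall>\<^sub>F n in sequentially. norm (P u (f n) - P u l) \<le> 2 * N u * N (f n - l)"
      by (intro always_eventually allI) (metis diff2 norm_P UNIV_I)
    show "(\<lambda>n. 2 * N u * N (f n - l)) \<longlonglongrightarrow> 0" using tendsto_mult_right_zero[OF assms] by simp
  qed
  thus ?thesis using Lim_null by blast
qed

lemma surj:
  fixes DA :: "'b set" and A :: "'b \<Rightarrow> 'b" and \<epsilon> :: real
  assumes DA0: "0 \<in> DA" and DAadd: "\<And>x y. x \<in> DA \<Longrightarrow> y \<in> DA \<Longrightarrow> x + y \<in> DA"
    and DAscale: "\<And>x r. x \<in> DA \<Longrightarrow> r *\<^sub>R x \<in> DA" and DAJ: "\<And>x. x \<in> DA \<Longrightarrow> Jv x \<in> DA"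
    and Aadd: "\<And>x y. x \<in> DA \<Longrightarrow> y \<in> DA \<Longrightarrow> A (x + y) = A x + A y"
    and Ascale: "\<And>x r. x \<in> DA \<Longrightarrow> A (r *\<^sub>R x) = r *\<^sub>R A x"
    and AJ: "\<And>x. x \<in> DA \<Longrightarrow> A (Jv x) = Jv (A x)"
    and dense: "\<And>x e. e > 0 \<Longrightarrow> \<exists>y\<in>DA. N (x - y) < e"
    and sym: "\<And>x y. x \<in> DA \<Longrightarrow> y \<in> DA \<Longrightarrow> P (A x) y = P x (A y)"
    and adj: "\<And>y z. (\<forall>x\<in>DA. P (A x) y = P x z) \<Longrightarrow> y \<in> DA"
    and pos: "\<And>x. x \<in> DA \<Longrightarrow> \<epsilon> * N x ^ 2 \<le> Re (P x (A x))" and eps: "\<epsilon> > 0"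
  shows "\<exists>y\<in>DA. A y = x"
proof -
  have Aminus: "x \<in> DA \<Longrightarrow> A (- x) = - A x" for x using Ascale[of x "-1"] by simp
  have DAminus: "x \<in> DA \<Longrightarrow> - x \<in> DA" for x using DAscale[of x "-1"] by simp
  have DAdiff: "x \<in> DA \<Longrightarrow> y \<in> DA \<Longrightarrow> x - y \<in> DA" for x y using DAadd[of x "-y"] DAminus by simp
  have Adiff: "x \<in> DA \<Longrightarrow> y \<in> DA \<Longrightarrow> A (x - y) = A x - A y" for x y
    using Aadd[of x "-y"] Aminus DAminus by simp
  have perp0: "u = 0" if h: "\<forall>w\<in>DA. P w u = 0" for u
  proof -
    have "N u \<le> 0"
    proof (rule field_le_epsilon)
      fix e :: real assume e: "e > 0"
      show "N u \<le> 0 + e"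
      proof (cases "N u = 0")
        case True thus ?thesis using e by simp
      next
        case False
        hence Nu: "N u > 0" using N_nonneg[of u] by simp
        obtain w where w: "w \<in> DA" "N (u - w) < e" using dense[OF e] by blast
        have "N u ^ 2 = Re (P u u)" using N_sq by simp
        also have "P u u = P (u - w) u + P w u" using diff1[of u w u] by simp
        also have "Re (P (u - w) u + P w u) = Re (P (u - w) u)" using h w by simp
        also have "\<dots> \<le> N (u - w) * N u" using CS_Re by simp
        also have "\<dots> \<le> e * N u" using w(2) Nu by simp
        finally have "N u * N u \<le> e * N u" by (simp add: power2_eq_square)
        thus ?thesis using Nu by simp
      qed
    qed
    hence "N u = 0" using N_nonneg[of u] by simp
    thus ?thesis by (rule definiteX)
  qed
  have adj_eq: "y \<in> DA \<and> A y = z" if h: "\<forall>w\<in>DA. P (A w) y = P w z" for y z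
  proof -
    have yD: "y \<in> DA" using adj h by blast
    have "\<forall>w\<in>DA. P w (A y - z) = 0" using h sym[OF _ yD] diff2 by simp
    hence "A y - z = 0" by (rule perp0)
    thus ?thesis using yD by simp
  qed
  have lower: "\<epsilon> * N y \<le> N (A y)" if y: "y \<in> DA" for y
  proof (cases "N y = 0")
    case True thus ?thesis using N_nonneg by simp
  next
    case False
    hence Ny: "N y > 0" using N_nonneg[of y] by simp
    have "\<epsilon> * N y ^ 2 \<le> N y * N (A y)" using pos[OF y] CS_Re[of y "A y"] by simp
    hence "(\<epsilon> * N y) * N y \<le> N (A y) * N y" by (simp add: power2_eq_square algebra_simps)
    thus ?thesis using Ny by simp
  qed
  define dd where "dd = (\<lambda>y. N (x - A y)) ` DA"
  define \<delta> where "\<delta> = Inf dd"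
  have ddne: "dd \<noteq> {}" unfolding dd_def using DA0 by auto
  have ddb: "bdd_below dd" unfolding dd_def using N_nonneg by (auto intro: bdd_belowI[of _ 0])
  have dle: "\<delta> \<le> N (x - A y)" if "y \<in> DA" for y unfolding \<delta>_def dd_def
    by (rule cINF_lower) (use ddb that in \<open>auto simp: dd_def\<close>)
  have d0: "\<delta> \<ge> 0" unfolding \<delta>_def by (rule cInf_greatest[OF ddne]) (auto simp: dd_def N_nonneg)
  have "\<exists>y\<in>DA. N (x - A y)^2 < \<delta>^2 + 1 / (real n + 1)" for n
  proof -
    have "\<delta>^2 < \<delta>^2 + 1 / (real n + 1)" by (simp add: add_pos_pos)
    hence "\<delta> < sqrt (\<delta>^2 + 1 / (real n + 1))" by (rule real_less_rsqrt)
    then obtain v where v: "v \<in> dd" "v < sqrt (\<delta>^2 + 1 / (real n + 1))"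
      using cInf_lessD[OF ddne] unfolding \<delta>_def by blast
    then obtain y where y: "y \<in> DA" "v = N (x - A y)" unfolding dd_def by blast
    have "N (x - A y)^2 < (sqrt (\<delta>^2 + 1 / (real n + 1)))^2"
      using v y N_nonneg by (intro power_strict_mono) auto
    also have "\<dots> = \<delta>^2 + 1 / (real n + 1)" by (simp add: add_nonneg_nonneg)
    finally show ?thesis using y by blast
  qed
  hence "\<forall>n. \<exists>y. y \<in> DA \<and> N (x - A y)^2 < \<delta>^2 + 1 / (real n + 1)" by blast
  from choice[OF this] obtain ys where ys': "\<forall>n. ys n \<in> DA \<and> N (x - A (ys n))^2 < \<delta>^2 + 1 / (real n + 1)"
    by blast
  hence ys: "\<And>n. ys n \<in> DA" "\<And>n. N (x - A (ys n))^2 < \<delta>^2 + 1 / (real n + 1)" by auto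
  have cA: "N (A (ys m) - A (ys n))^2 \<le> 2 / (real m + 1) + 2 / (real n + 1)" for m n
  proof -
    define a where "a = x - A (ys n)"
    define b where "b = x - A (ys m)"
    have mid: "(1/2) *\<^sub>R (ys n + ys m) \<in> DA" using ys DAadd DAscale by simp
    have Amid: "A ((1/2) *\<^sub>R (ys n + ys m)) = (1/2) *\<^sub>R (A (ys n) + A (ys m))"
      using Ascale[of "ys n + ys m" "1/2"] Aadd[of "ys n" "ys m"] ys DAadd by simp
    have "a + b = 2 *\<^sub>R (x - A ((1/2) *\<^sub>R (ys n + ys m)))"
      unfolding a_def b_def Amid by (simp add: algebra_simps scaleR_2)
    hence "N (a + b) = 2 * N (x - A ((1/2) *\<^sub>R (ys n + ys m)))" using N_scale by simp
    hence ab: "N (a + b)^2 \<ge> 4 * \<delta>^2" using dle[OF mid] d0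
      by (simp add: power_mult_distrib power_mono)
    have "a - b = A (ys m) - A (ys n)" unfolding a_def b_def by simp
    hence "N (A (ys m) - A (ys n))^2 = 2 * N a^2 + 2 * N b^2 - N (a + b)^2" using parallelogram[of a b] by simp
    also have "\<dots> \<le> 2 * (\<delta>^2 + 1 / (real n + 1)) + 2 * (\<delta>^2 + 1 / (real m + 1)) - 4 * \<delta>^2"
      using ys(2)[of n] ys(2)[of m] ab unfolding a_def b_def by simp
    finally show ?thesis by simp
  qed
  obtain z where z: "(\<lambda>n. N (A (ys n) - z)) \<longlonglongrightarrow> 0" using cauchy_seq[of "\<lambda>n. A (ys n)", OF cA] by blast
  have "\<exists>y. (\<lambda>n. N (ys n - y)) \<longlonglongrightarrow> 0"
  proof (rule complete)
    fix e :: real assume e: "e > 0"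
    have e': "\<epsilon> * e > 0" using e eps by simp
    have "eventually (\<lambda>n. N (A (ys n) - z) < \<epsilon> * e / 2) sequentially"
      using order_tendstoD(2)[OF z, of "\<epsilon> * e / 2"] e' by simp
    then obtain M0 where M0: "\<And>n. n \<ge> M0 \<Longrightarrow> N (A (ys n) - z) < \<epsilon> * e / 2"
      unfolding eventually_sequentially by blast
    have M: "\<forall>m\<ge>M0. \<forall>n\<ge>M0. N (A (ys m) - A (ys n)) < \<epsilon> * e"
    proof (intro allI impI)
      fix m n assume mn: "M0 \<le> m" "M0 \<le> n"
      have "N (A (ys m) - A (ys n)) \<le> N (A (ys m) - z) + N (z - A (ys n))"
        using tri_diff[of "A (ys m)" z "A (ys n)"] by simp
      also have "N (z - A (ys n)) = N (A (ys n) - z)" using N_diff_comm by simp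
      finally show "N (A (ys m) - A (ys n)) < \<epsilon> * e" using M0[OF mn(1)] M0[OF mn(2)] by simp
    qed
    show "\<exists>M. \<forall>m\<ge>M. \<forall>n\<ge>M. N (ys m - ys n) < e"
    proof (intro exI[of _ M0] allI impI)
      fix m n assume mn: "M0 \<le> m" "M0 \<le> n"
      have "\<epsilon> * N (ys m - ys n) \<le> N (A (ys m) - A (ys n))" using lower[of "ys m - ys n"] DAdiff ys Adiff by simp
      also have "\<dots> < \<epsilon> * e" using M mn by simp
      finally show "N (ys m - ys n) < e" using eps by simp
    qed
  qed
  then obtain y where y: "(\<lambda>n. N (ys n - y)) \<longlonglongrightarrow> 0" by blast
  have "\<forall>w\<in>DA. P (A w) y = P w z"
  proof
    fix w assume w: "w \<in> DA"
    have l1: "(\<lambda>n. P (A w) (ys n)) \<longlonglongrightarrow> P (A w) y" by (rule lim_P2[OF y])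
    have l2: "(\<lambda>n. P w (A (ys n))) \<longlonglongrightarrow> P w z" by (rule lim_P2[OF z])
    have "(\<lambda>n. P (A w) (ys n)) = (\<lambda>n. P w (A (ys n)))" using sym[OF w ys(1)] by simp
    thus "P (A w) y = P w z" using l1 l2 LIMSEQ_unique by simp
  qed
  from adj_eq[OF this] have yD: "y \<in> DA" and Ay: "A y = z" by auto
  define r where "r = x - A y"
  have rmin: "N r^2 \<le> \<delta>^2"
  proof -
    have l1: "(\<lambda>n. N (x - A (ys n))) \<longlonglongrightarrow> N (x - z)"
    proof -
      have "(\<lambda>n. N (x - A (ys n)) - N (x - z)) \<longlonglongrightarrow> 0"
      proof (rule Lim_null_comparison)
        show "\<forall>\<^sub>F n in sequentially. norm (N (x - A (ys n)) - N (x - z)) \<le> N (A (ys n) - z)"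
          using rev_tri[of "x - A (ys _)" "x - z"] by (simp add: always_eventually N_diff_comm)
        show "(\<lambda>n. N (A (ys n) - z)) \<longlonglongrightarrow> 0" using z .
      qed
      thus ?thesis using Lim_null by blast
    qed
    have l2: "(\<lambda>n. \<delta>^2 + 1 / (real n + 1)) \<longlonglongrightarrow> \<delta>^2 + 0"
    proof -
      have "(\<lambda>n. 1 / real (Suc n)) \<longlonglongrightarrow> 0" using LIMSEQ_Suc[OF lim_1_over_n] .
      hence "(\<lambda>n. 1 / (real n + 1)) \<longlonglongrightarrow> 0" by (simp add: add.commute)
      thus ?thesis by (intro tendsto_intros)
    qed
    have "N (x - z)^2 \<le> \<delta>^2 + 0"
      by (rule LIMSEQ_le[OF tendsto_power[OF l1] l2]) (use ys(2) less_imp_le in blast)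
    thus ?thesis unfolding r_def Ay by simp
  qed
  have orth: "P r (A w) = 0" if w: "w \<in> DA" for w
  proof -
    have re0: "Re (P r (A v)) = 0" if v: "v \<in> DA" for v
    proof (rule quad_zero[of "N (A v)^2"])
      show "0 \<le> N (A v)^2" by simp
      fix t :: real
      have yt: "y + t *\<^sub>R v \<in> DA" using DAadd DAscale yD v by simp
      have "x - A (y + t *\<^sub>R v) = r + (- t) *\<^sub>R A v" unfolding r_def using Aadd Ascale yD v DAscale by simp
      moreover have "\<delta>^2 \<le> N (x - A (y + t *\<^sub>R v))^2" using dle[OF yt] d0 by (simp add: power_mono)
      ultimately have "N (r + (- t) *\<^sub>R A v)^2 \<ge> N r^2" using rmin by simp
      moreover have "N (r + (- t) *\<^sub>R A v)^2 = N r^2 + 2 * (- t) * Re (P r (A v)) + (- t)^2 * N (A v)^2"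
        using quad_expand[of r "A v" "- t"] N_sq by simp
      ultimately show "2 * t * Re (P r (A v)) \<le> t^2 * N (A v)^2" by simp
    qed
    have "Re (P r (A (Jv w))) = 0" using re0 DAJ w by simp
    hence "Im (P r (A w)) = 0" using AJ[OF w] J2 by simp
    thus ?thesis using re0[OF w] by (simp add: complex_eq_iff)
  qed
  have "\<forall>w\<in>DA. P (A w) r = P w 0"
  proof
    fix w assume w: "w \<in> DA"
    have "P (A w) r = cnj (P r (A w))" using herm[of "A w" r] by simp
    thus "P (A w) r = P w 0" using orth[OF w] zero2 by simp
  qed
  from adj_eq[OF this] have rD: "r \<in> DA" and Ar: "A r = 0" by auto
  have "\<epsilon> * N r^2 \<le> 0" using pos[OF rD] Ar zero2 by simp
  hence "N r = 0" using eps by (simp add: mult_le_0_iff)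
  hence "r = 0" by (rule definiteX)
  thus ?thesis unfolding r_def using yD by auto
qed

end


lemma cs_real[simp]: "cscale J (complex_of_real r) x = r *\<^sub>R x"
  unfolding cscale_def by simp

lemma cs_i[simp]: "cscale J \<i> x = J x"
  unfolding cscale_def by simp

lemma cs_mi[simp]: "cscale J (- \<i>) x = - J x"
  unfolding cscale_def by simp

lemma ps_real: "pscale J (complex_of_real r) x = r *\<^sub>R x"
  unfolding pscale_def by (simp add: prod_eq_iff)

lemma cstr_lin:
  assumes "complex_structure J"
  shows "J (x + y) = J x + J y" "J (- x) = - J x" "J (r *\<^sub>R x) = r *\<^sub>R J x" "J (J x) = - x" "J 0 = 0"
    "J (x - y) = J x - J y"
  using assms unfolding complex_structure_def
  by (auto simp: linear_add linear_neg linear_scale linear_0 linear_diff)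

lemma Gplus_formula:
  assumes "complex_structure J"
  shows "Gplus J A B C \<xi> = (- snd \<xi>, A (fst \<xi>) + J (B (snd \<xi>)) + C (fst \<xi>))"
  unfolding Gplus_def pscale_def Hop_def Bhat_def Vop_def
  using cstr_lin[OF assms] by simp

lemma Gminus_formula:
  assumes "complex_structure J"
  shows "Gminus J A B C \<xi> = - Gplus J A B C \<xi>"
  unfolding Gminus_def Gplus_def pscale_def
  using cstr_lin[OF assms] by (simp add: prod_eq_iff)

lemma lin_on_props:
  assumes "lin_on J D f"
  shows "0 \<in> D" "x \<in> D \<Longrightarrow> y \<in> D \<Longrightarrow> x + y \<in> D" "x \<in> D \<Longrightarrow> r *\<^sub>R x \<in> D" "x \<in> D \<Longrightarrow> J x \<in> D"
    "x \<in> D \<Longrightarrow> y \<in> D \<Longrightarrow> f (x + y) = f x + f y" "x \<in> D \<Longrightarrow> f (r *\<^sub>R x) = r *\<^sub>R f x"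
    "x \<in> D \<Longrightarrow> f (J x) = J (f x)"
proof -
  have cs: "csubspace_on J D" using assms unfolding lin_on_def by simp
  show "0 \<in> D" using cs unfolding csubspace_on_def by simp
  show "x \<in> D \<Longrightarrow> y \<in> D \<Longrightarrow> x + y \<in> D" using cs unfolding csubspace_on_def by simp
  show "x \<in> D \<Longrightarrow> r *\<^sub>R x \<in> D" using cs unfolding csubspace_on_def by (metis cs_real)
  show "x \<in> D \<Longrightarrow> J x \<in> D" using cs unfolding csubspace_on_def by (metis cs_i)
  show "x \<in> D \<Longrightarrow> y \<in> D \<Longrightarrow> f (x + y) = f x + f y" using assms unfolding lin_on_def by simp
  show "x \<in> D \<Longrightarrow> f (r *\<^sub>R x) = r *\<^sub>R f x" using assms unfolding lin_on_def by (metis cs_real)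
  show "x \<in> D \<Longrightarrow> f (J x) = J (f x)" using assms unfolding lin_on_def by (metis cs_i)
qed

lemma lin_on_minus:
  assumes "lin_on J D f" "x \<in> D" shows "- x \<in> D" "f (- x) = - f x"
  using lin_on_props(3,6)[OF assms(1,2), of "-1"] by simp_all

lemma lin_on_diff:
  assumes "lin_on J D f" "x \<in> D" "y \<in> D" shows "x - y \<in> D" "f (x - y) = f x - f y"
  using lin_on_props(2,5)[OF assms(1,2), of "- y"] lin_on_minus[OF assms(1,3)] by simp_all

lemma lin_on_zero:
  assumes "lin_on J D f" shows "f 0 = 0"
  using lin_on_props(6)[OF assms lin_on_props(1)[OF assms], of 0] by simp

lemma X_sip:
  assumes ci: "cinner_space J ip"
  shows "sip UNIV ip J"
proof -
  note cd = ci[unfolded cinner_space_def]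
  have h1': "\<forall>x y. ip x y = cnj (ip y x)" using cd by (elim conjE) assumption
  have h2': "\<forall>x y z. ip x (y + z) = ip x y + ip x z" using cd by (elim conjE) assumption
  have h3': "\<forall>c x y. ip x (cscale J c y) = c * ip x y" using cd by (elim conjE) assumption
  have h4': "\<forall>x. 0 \<le> Re (ip x x)" using cd by (elim conjE) assumption
  note h1 = h1'[rule_format] and h2 = h2'[rule_format] and h3 = h3'[rule_format] and h4 = h4'[rule_format]
  have h5: "\<And>x y r. ip x (r *\<^sub>R y) = complex_of_real r * ip x y"
  proof -
    fix x y r show "ip x (r *\<^sub>R y) = complex_of_real r * ip x y" using h3[of x "complex_of_real r" y] by simp
  qed
  have h6: "\<And>x y. ip x (J y) = \<i> * ip x y"
  proof -
    fix x y show "ip x (J y) = \<i> * ip x y" using h3[of x "\<i>" y] by simp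
  qed
  show ?thesis
    apply unfold_locales
    subgoal by simp
    subgoal by simp
    subgoal by simp
    subgoal by simp
    subgoal by (rule h1)
    subgoal by (rule h2)
    subgoal by (rule h5)
    subgoal by (rule h6)
    subgoal by (rule h4)
    done
qed

lemma X_N: "sip UNIV ip J \<Longrightarrow> sip.N ip = cnorm ip"
  by (rule ext) (simp add: sip.N_def cnorm_def)

lemma X_hilb:
  assumes "hilbert_space J ip"
  shows "hilb ip J"
proof -
  have ci: "cinner_space J ip" using assms unfolding hilbert_space_def by simp
  interpret X: sip UNIV ip J by (rule X_sip[OF ci])
  have NX: "X.N = cnorm ip" by (rule X_N) unfold_locales
  show ?thesis
  proof (unfold_locales)
    fix x :: 'a assume "X.N x = 0"
    hence "X.N x ^ 2 = 0" by simp
    hence "ip x x = 0" using X.P_self[of x] by simp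
    thus "x = 0" using ci unfolding cinner_space_def by blast
  next
    fix f :: "nat \<Rightarrow> 'a"
    assume "\<And>e. 0 < e \<Longrightarrow> \<exists>M. \<forall>m\<ge>M. \<forall>n\<ge>M. X.N (f m - f n) < e"
    thus "\<exists>l. (\<lambda>n. X.N (f n - l)) \<longlonglongrightarrow> 0" using assms unfolding hilbert_space_def NX by blast
  qed
qed


lemma Yset_iff: "x \<in> Yset DS \<longleftrightarrow> fst x \<in> DS"
  unfolding Yset_def by (cases x) auto

lemma Y_sip:
  assumes ci: "cinner_space J ip" and Slin: "lin_on J DS S"
  shows "sip (Yset DS) (ipY ip S) (pscale J \<i>)"
proof -
  interpret X: sip UNIV ip J by (rule X_sip[OF ci])
  note SP = lin_on_props[OF Slin]
  show ?thesis
  proof (unfold_locales, goal_cases)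
    case 1 show ?case using SP(1) by (simp add: Yset_iff)
  next
    case (2 x y) thus ?case using SP(2) by (simp add: Yset_iff)
  next
    case (3 x r) thus ?case using SP(3) by (simp add: Yset_iff)
  next
    case (4 x) thus ?case using SP(4) by (simp add: Yset_iff pscale_def)
  next
    case (5 x y)
    show ?case unfolding ipY_def using X.herm[of "S (fst x)" "S (fst y)"] X.herm[of "snd x" "snd y"] by simp
  next
    case (6 x y z)
    have "S (fst (y + z)) = S (fst y) + S (fst z)" using SP(5) 6 by (simp add: Yset_iff)
    thus ?case unfolding ipY_def using X.add2 by simp
  next
    case (7 x y r)
    have "S (fst (r *\<^sub>R y)) = r *\<^sub>R S (fst y)" using SP(6) 7 by (simp add: Yset_iff)
    thus ?case unfolding ipY_def using X.scale2 by (simp add: distrib_left)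
  next
    case (8 x y)
    have "S (fst (pscale J \<i> y)) = J (S (fst y))" using SP(7) 8 by (simp add: Yset_iff pscale_def)
    moreover have "snd (pscale J \<i> y) = J (snd y)" by (simp add: pscale_def)
    ultimately show ?case unfolding ipY_def using X.J2 by (simp add: distrib_left)
  next
    case (9 x)
    show ?case unfolding ipY_def using X.pos[of "S (fst x)"] X.pos[of "snd x"] by simp
  qed
qed

lemma Y_N: "sip (Yset DS) (ipY ip S) Jv \<Longrightarrow> sip.N (ipY ip S) = nY ip S"
  by (rule ext) (simp add: sip.N_def nY_def)

lemma Y_N_sq:
  assumes "cinner_space J ip"
  shows "nY ip S x ^ 2 = cnorm ip (S (fst x)) ^ 2 + cnorm ip (snd x) ^ 2"
proof -
  interpret X: sip UNIV ip J by (rule X_sip[OF assms])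
  have "Re (ipY ip S x x) \<ge> 0" unfolding ipY_def using X.pos[of "S (fst x)"] X.pos[of "snd x"] by simp
  thus ?thesis unfolding nY_def ipY_def using X.N_sq X_N[OF X.sip_axioms] by simp
qed


lemma sgp_conc:
  assumes aY: "absY (Yset DS) (ipY ip S) (pscale J \<i>) D"
    and sg: "sc_semigroup J ip S DS T" and gen: "neg_generator ip S DS T D G"
    and GV: "\<And>x. x \<in> D \<Longrightarrow> G x \<in> Yset DS"
    and Gadd: "\<And>x y. x \<in> D \<Longrightarrow> y \<in> D \<Longrightarrow> G (x + y) = G x + G y"
    and Gscale: "\<And>x r. x \<in> D \<Longrightarrow> G (r *\<^sub>R x) = r *\<^sub>R G x"
    and en: "\<And>x. x \<in> D \<Longrightarrow> \<bar>Re (ipY ip S x (G x))\<bar> \<le> \<omega> * nY ip S x ^ 2"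
    and om: "\<omega> \<ge> 0"
  shows "sgp (Yset DS) (ipY ip S) (pscale J \<i>) D T G \<omega>"
proof -
  interpret Y: absY "Yset DS" "ipY ip S" "pscale J \<i>" D by (rule aY)
  have NY: "Y.N = nY ip S" by (rule Y_N[OF Y.sip_axioms])
  have NL: "Y.Nlim F f l \<longleftrightarrow> ((\<lambda>x. nY ip S (f x - l)) \<longlongrightarrow> 0) F" for F :: "real filter" and f l
    unfolding Y.Nlim_def NY ..
  note sgd = sg[unfolded sc_semigroup_def]
  have bl: "\<And>t. t \<ge> 0 \<Longrightarrow> bounded_lin_Y J ip S DS (T t)" using sgd by blast
  note bld = bl[unfolded bounded_lin_Y_def]
  note gd = gen[unfolded neg_generator_def]
  show ?thesis
  proof (rule sgp.intro[OF aY], rule sgp_axioms.intro, goal_cases)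
    case (1 t x) thus ?case using bld by blast
  next
    case (2 t x y) thus ?case using bld by blast
  next
    case (3 t x r)
    have "T t (pscale J (complex_of_real r) x) = pscale J (complex_of_real r) (T t x)" using bld 3 by blast
    thus ?case by (simp add: ps_real)
  next
    case (4 t) thus ?case using bld NY by (simp add: NY)
  next
    case (5 x) thus ?case using sgd by blast
  next
    case (6 s t x) thus ?case using sgd by blast
  next
    case (7 x t) thus ?case using sgd NY by simp
  next
    case (8 x) thus ?case using gd NL by simp
  next
    case (9 x)
    have "x \<in> Yset DS" using 9 Y.D_sub by blast
    thus ?case using gd NL 9 by simp
  next
    case (10 x) thus ?case using GV by simp
  next
    case (11 x y) thus ?case using Gadd by simp
  next
    case (12 x r) thus ?case using Gscale by simp
  next
    case (13 x) thus ?case using en NY by simp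
  next
    case 14 thus ?case using om .
  qed
qed

theorem corollary9:
  fixes J :: "'a::real_vector \<Rightarrow> 'a" and ip :: "'a \<Rightarrow> 'a \<Rightarrow> complex"
    and DA DS :: "'a set" and A S B C :: "'a \<Rightarrow> 'a"
    and TP TM :: "real \<Rightarrow> 'a \<times> 'a \<Rightarrow> 'a \<times> 'a"
    and \<epsilon> a b c d :: real
  assumes hilb: "hilbert_space J ip" and nontriv: "\<exists>x::'a. x \<noteq> 0"
    and A_sa: "self_adjoint J ip DA A"
    and eps: "\<epsilon> > 0" and A_pos: "\<forall>x\<in>DA. Re (ip x (A x)) \<ge> \<epsilon> * Re (ip x x)"
    and sqrt: "is_pos_sqrt J ip DA A DS S"
    and B_lin: "lin_on J DS B" and a_bnd: "0 \<le> a" "a < 1"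
    and B_bnd: "\<forall>x\<in>DS. (cnorm ip (B x))\<^sup>2 \<le> a\<^sup>2 * (cnorm ip (S x))\<^sup>2 + b\<^sup>2 * (cnorm ip x)\<^sup>2"
    and B_sym_or_bdd: "symmetric_op ip DS B \<or> (\<exists>K. \<forall>x\<in>DS. cnorm ip (B x) \<le> K * cnorm ip x)"
    and C_lin: "lin_on J DS C"
    and C_bnd: "\<forall>x\<in>DS. (cnorm ip (C x))\<^sup>2 \<le> c\<^sup>2 * (cnorm ip (S x))\<^sup>2 + d\<^sup>2 * (cnorm ip x)\<^sup>2"
    and TP_sg: "sc_semigroup J ip S DS TP"
    and TP_gen: "neg_generator ip S DS TP (DH DA DS) (Gplus J A B C)"
    and TM_sg: "sc_semigroup J ip S DS TM"
    and TM_gen: "neg_generator ip S DS TM (DH DA DS) (Gminus J A B C)"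
  shows "sc_group J ip S DS (\<lambda>t. if 0 \<le> t then TP t else TM (- t))
     \<and> (\<forall>t0. \<forall>\<xi>\<in>DH DA DS. \<exists>!u. u t0 = \<xi> \<and>
          (\<forall>t. u t \<in> DH DA DS \<and> has_Y_derivative ip S u (- Gplus J A B C (u t)) t))
     \<and> (\<forall>u. (\<forall>t. u t \<in> DH DA DS \<and> has_Y_derivative ip S u (- Gplus J A B C (u t)) t) \<longrightarrow>
          (\<forall>t. ((\<lambda>s. ipY ip S (u s) (u s)) has_vector_derivative
                  complex_of_real (- 2 * Re (ipY ip S (u t) (Gplus J A B C (u t))))) (at t)))"
proof -
  have ci: "cinner_space J ip" using hilb unfolding hilbert_space_def by (elim conjE)
  interpret X: hilb ip J by (rule X_hilb[OF hilb])
  have NX: "X.N = cnorm ip" by (rule X_N[OF X.sip_axioms])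
  note sq = sqrt[unfolded is_pos_sqrt_def]
  have Ssa: "self_adjoint J ip DS S" using sq by (elim conjE)
  have DAeq: "DA = {x \<in> DS. S x \<in> DS}" using sq by (elim conjE)
  have SSA: "\<And>x. x \<in> DA \<Longrightarrow> S (S x) = A x" using sq by (elim conjE) blast
  note ssd = Ssa[unfolded self_adjoint_def]
  have Slin: "lin_on J DS S" using ssd by (elim conjE)
  have Sdense: "dense_in ip DS" using ssd by (elim conjE)
  have Ssym: "\<And>x y. x \<in> DS \<Longrightarrow> y \<in> DS \<Longrightarrow> ip (S x) y = ip x (S y)"
    using ssd unfolding symmetric_op_def by (elim conjE) blast
  note asd = A_sa[unfolded self_adjoint_def]
  have Alin: "lin_on J DA A" using asd by (elim conjE)
  have Adense: "dense_in ip DA" using asd by (elim conjE)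
  have Asym: "\<And>x y. x \<in> DA \<Longrightarrow> y \<in> DA \<Longrightarrow> ip (A x) y = ip x (A y)"
    using asd unfolding symmetric_op_def by (elim conjE) blast
  have Aadj: "\<And>y z. (\<forall>x\<in>DA. ip (A x) y = ip x z) \<Longrightarrow> y \<in> DA"
    using asd by (elim conjE) blast
  note SP = lin_on_props[OF Slin] and AP = lin_on_props[OF Alin]
    and BP = lin_on_props[OF B_lin] and CP = lin_on_props[OF C_lin]
  have DA_DS: "x \<in> DA \<Longrightarrow> x \<in> DS" for x using DAeq by blast
  have DA_SDS: "x \<in> DA \<Longrightarrow> S x \<in> DS" for x using DAeq by blast
  have csq: "cnorm ip v ^ 2 = Re (ip v v)" for v using X.N_sq[of v] NX by simp
  have cnn: "cnorm ip v \<ge> 0" for v using X.N_nonneg[of v] NX by simp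
  have cdef: "cnorm ip v = 0 \<Longrightarrow> v = 0" for v using X.definiteX[of v] NX by simp
  have lowS: "\<epsilon> * cnorm ip x ^ 2 \<le> cnorm ip (S x) ^ 2" if x: "x \<in> DA" for x
  proof -
    have "ip (S x) (S x) = ip x (S (S x))" using Ssym[OF DA_DS[OF x] DA_SDS[OF x]] .
    also have "\<dots> = ip x (A x)" using SSA[OF x] by simp
    finally show ?thesis using A_pos x csq by simp
  qed
  have S_inj: "x = 0" if x: "x \<in> DS" and Sx: "S x = 0" for x
  proof -
    have "\<forall>w\<in>DA. ip (A w) x = ip w 0"
    proof
      fix w assume w: "w \<in> DA"
      have "ip (A w) x = ip (S (S w)) x" using SSA[OF w] by simp
      also have "\<dots> = ip (S w) (S x)" using Ssym[OF DA_SDS[OF w] x] .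
      finally show "ip (A w) x = ip w 0" using Sx X.zero2 by simp
    qed
    hence xA: "x \<in> DA" by (rule Aadj)
    have "A x = 0" using SSA[OF xA] Sx lin_on_zero[OF Slin] by simp
    moreover have "\<epsilon> * Re (ip x x) \<le> Re (ip x (A x))" using A_pos xA by blast
    ultimately have "\<epsilon> * Re (ip x x) \<le> 0" using X.zero2[of x] by simp
    hence "Re (ip x x) \<le> 0" using eps by (simp add: mult_le_0_iff)
    hence "cnorm ip x ^ 2 \<le> 0" using csq by simp
    hence "cnorm ip x = 0" by simp
    thus ?thesis by (rule cdef)
  qed
  have A_surj: "\<exists>y\<in>DA. A y = v" for v
  proof (rule X.surj[where \<epsilon> = \<epsilon>])
    show "0 \<in> DA" by (rule AP(1))
    show "\<And>x y. x \<in> DA \<Longrightarrow> y \<in> DA \<Longrightarrow> x + y \<in> DA" by (rule AP(2))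
    show "\<And>x r. x \<in> DA \<Longrightarrow> r *\<^sub>R x \<in> DA" by (rule AP(3))
    show "\<And>x. x \<in> DA \<Longrightarrow> J x \<in> DA" by (rule AP(4))
    show "\<And>x y. x \<in> DA \<Longrightarrow> y \<in> DA \<Longrightarrow> A (x + y) = A x + A y" by (rule AP(5))
    show "\<And>x r. x \<in> DA \<Longrightarrow> A (r *\<^sub>R x) = r *\<^sub>R A x" by (rule AP(6))
    show "\<And>x. x \<in> DA \<Longrightarrow> A (J x) = J (A x)" by (rule AP(7))
    show "\<And>x e. 0 < e \<Longrightarrow> \<exists>y\<in>DA. X.N (x - y) < e" using Adense unfolding dense_in_def NX by blast
    show "\<And>x y. x \<in> DA \<Longrightarrow> y \<in> DA \<Longrightarrow> ip (A x) y = ip x (A y)" by (rule Asym)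
    show "\<And>y z. \<forall>x\<in>DA. ip (A x) y = ip x z \<Longrightarrow> y \<in> DA" by (rule Aadj)
    show "\<And>x. x \<in> DA \<Longrightarrow> \<epsilon> * (X.N x)\<^sup>2 \<le> Re (ip x (A x))" using A_pos csq NX by simp
    show "0 < \<epsilon>" by (rule eps)
  qed
  interpret Y: sip "Yset DS" "ipY ip S" "pscale J \<i>" by (rule Y_sip[OF ci Slin])
  have NY: "Y.N = nY ip S" by (rule Y_N[OF Y.sip_axioms])
  have nYsq: "nY ip S x ^ 2 = cnorm ip (S (fst x)) ^ 2 + cnorm ip (snd x) ^ 2" for x by (rule Y_N_sq[OF ci])
  have DH_iff: "x \<in> DH DA DS \<longleftrightarrow> fst x \<in> DA \<and> snd x \<in> DS" for x unfolding DH_def by (cases x) auto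
  have aY: "absY (Yset DS) (ipY ip S) (pscale J \<i>) (DH DA DS)"
  proof (rule absY.intro[OF Y.sip_axioms], rule absY_axioms.intro, goal_cases)
    case 1 show ?case using DA_DS by (auto simp: DH_iff Yset_iff)
  next
    case 2 show ?case using AP(1) SP(1) by (simp add: DH_iff)
  next
    case (3 x y) thus ?case using AP(2) SP(2) by (simp add: DH_iff)
  next
    case (4 x r) thus ?case using AP(3) SP(3) by (simp add: DH_iff)
  next
    case (5 x)
    have "nY ip S x ^ 2 = 0" using 5 NY by simp
    hence "cnorm ip (S (fst x))^2 + cnorm ip (snd x)^2 = 0" using nYsq[of x] by simp
    hence "cnorm ip (S (fst x))^2 = 0" "cnorm ip (snd x)^2 = 0"
      using zero_le_power2 add_nonneg_eq_0_iff by blast+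
    hence "cnorm ip (S (fst x)) = 0" "cnorm ip (snd x) = 0" by simp_all
    hence "S (fst x) = 0" "snd x = 0" using cdef by auto
    hence "fst x = 0" using S_inj 5 by (simp add: Yset_iff)
    thus ?case using \<open>snd x = 0\<close> by (simp add: prod_eq_iff)
  next
    case (6 x e)
    have x1: "fst x \<in> DS" using 6 by (simp add: Yset_iff)
    have e2: "e / 2 > 0" using 6 by simp
    obtain v where v: "v \<in> DS" "cnorm ip (S (fst x) - v) < e / 2" using Sdense e2 unfolding dense_in_def by blast
    obtain w where w: "w \<in> DA" "A w = v" using A_surj by blast
    define y1 where "y1 = S w"
    have y1S: "S y1 = v" unfolding y1_def using SSA[OF w(1)] w(2) by simp
    have y1A: "y1 \<in> DA" unfolding DAeq y1_def using DA_SDS[OF w(1)] y1S v(1) y1_def by simp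
    obtain z where z: "z \<in> DS" "cnorm ip (snd x - z) < e / 2" using Sdense e2 unfolding dense_in_def by blast
    have yD: "(y1, z) \<in> DH DA DS" using y1A z(1) by (simp add: DH_iff)
    have "S (fst x - y1) = S (fst x) - v" using lin_on_diff(2)[OF Slin x1 DA_DS[OF y1A]] y1S by simp
    hence "nY ip S (x - (y1, z)) ^ 2 = cnorm ip (S (fst x) - v) ^ 2 + cnorm ip (snd x - z) ^ 2"
      using nYsq[of "x - (y1, z)"] by simp
    also have "\<dots> \<le> (cnorm ip (S (fst x) - v) + cnorm ip (snd x - z))^2"
      using cnn by (simp add: power2_eq_square algebra_simps)
    finally have "nY ip S (x - (y1, z)) \<le> cnorm ip (S (fst x) - v) + cnorm ip (snd x - z)"
      using cnn by (meson add_nonneg_nonneg power2_le_imp_le)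
    also have "\<dots> < e" using v(2) z(2) by simp
    finally show ?case using yD NY by auto
  qed
  interpret YA: absY "Yset DS" "ipY ip S" "pscale J \<i>" "DH DA DS" by (rule aY)
  have cstr: "complex_structure J" using ci unfolding cinner_space_def by (elim conjE)
  note Gf = Gplus_formula[OF cstr, of A B C]
  have Kb_ex: "\<exists>Kb\<ge>0. \<forall>y\<in>DS. \<bar>Im (ip y (B y))\<bar> \<le> Kb * cnorm ip y ^ 2"
  proof (cases "symmetric_op ip DS B")
    case True
    have "Im (ip y (B y)) = 0" if y: "y \<in> DS" for y
    proof -
      have "ip (B y) y = ip y (B y)" using True y unfolding symmetric_op_def by blast
      moreover have "ip (B y) y = cnj (ip y (B y))" using X.herm[of "B y" y] by simp
      ultimately have "Im (ip y (B y)) = Im (cnj (ip y (B y)))" by simp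
      thus ?thesis by simp
    qed
    thus ?thesis by (intro exI[of _ 0]) simp
  next
    case False
    then obtain K where K: "\<forall>x\<in>DS. cnorm ip (B x) \<le> K * cnorm ip x" using B_sym_or_bdd by blast
    have "\<bar>Im (ip y (B y))\<bar> \<le> (2 * \<bar>K\<bar>) * cnorm ip y ^ 2" if y: "y \<in> DS" for y
    proof -
      have "\<bar>Im (ip y (B y))\<bar> \<le> cmod (ip y (B y))" by (rule abs_Im_le_cmod)
      also have "\<dots> \<le> 2 * cnorm ip y * cnorm ip (B y)" using X.norm_P[of y "B y"] NX by simp
      also have "cnorm ip (B y) \<le> \<bar>K\<bar> * cnorm ip y"
      proof -
        have "cnorm ip (B y) \<le> K * cnorm ip y" using K y by blast
        also have "\<dots> \<le> \<bar>K\<bar> * cnorm ip y" using cnn[of y] by (rule mult_right_mono[OF abs_ge_self])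
        finally show ?thesis .
      qed
      hence "2 * cnorm ip y * cnorm ip (B y) \<le> 2 * cnorm ip y * (\<bar>K\<bar> * cnorm ip y)"
        using cnn[of y] by (simp add: mult_left_mono)
      finally show ?thesis by (simp add: power2_eq_square algebra_simps)
    qed
    thus ?thesis by (intro exI[of _ "2 * \<bar>K\<bar>"]) simp
  qed
  then obtain Kb where Kb: "Kb \<ge> 0" "\<And>y. y \<in> DS \<Longrightarrow> \<bar>Im (ip y (B y))\<bar> \<le> Kb * cnorm ip y ^ 2" by blast
  define \<kappa> where "\<kappa> = sqrt (c^2 + d^2 / \<epsilon>)"
  have kap0: "\<kappa> \<ge> 0" unfolding \<kappa>_def using eps by simp
  have Cb: "cnorm ip (C x) \<le> \<kappa> * cnorm ip (S x)" if x: "x \<in> DA" for x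
  proof -
    have "cnorm ip x ^ 2 \<le> cnorm ip (S x) ^ 2 / \<epsilon>" using lowS[OF x] eps by (simp add: field_simps)
    hence "d^2 * cnorm ip x ^ 2 \<le> d^2 * (cnorm ip (S x) ^ 2 / \<epsilon>)" by (rule mult_left_mono) simp
    moreover have "cnorm ip (C x) ^ 2 \<le> c^2 * cnorm ip (S x) ^ 2 + d^2 * cnorm ip x ^ 2"
      using C_bnd DA_DS[OF x] by blast
    ultimately have "cnorm ip (C x) ^ 2 \<le> c^2 * cnorm ip (S x) ^ 2 + d^2 * (cnorm ip (S x) ^ 2 / \<epsilon>)"
      by linarith
    also have "\<dots> = (\<kappa> * cnorm ip (S x))^2" unfolding \<kappa>_def using eps
      by (simp add: power_mult_distrib field_simps)
    finally show ?thesis using cnn kap0 by (meson mult_nonneg_nonneg power2_le_imp_le)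
  qed
  define \<omega> where "\<omega> = Kb + \<kappa>"
  have om: "\<omega> \<ge> 0" unfolding \<omega>_def using Kb(1) kap0 by simp
  have energy: "\<bar>Re (ipY ip S \<xi> (Gplus J A B C \<xi>))\<bar> \<le> \<omega> * nY ip S \<xi> ^ 2" if xi: "\<xi> \<in> DH DA DS" for \<xi>
  proof -
    obtain x y where xy: "\<xi> = (x, y)" by (cases \<xi>)
    have x: "x \<in> DA" and y: "y \<in> DS" using xi xy by (auto simp: DH_iff)
    define z where "z = ip (S x) (S y)"
    define w where "w = ip y (B y)"
    have e1: "ip y (A x) = cnj z"
    proof -
      have "ip y (A x) = ip y (S (S x))" using SSA[OF x] by simp
      also have "\<dots> = ip (S y) (S x)" using Ssym[OF y DA_SDS[OF x]] by simp
      also have "\<dots> = cnj z" unfolding z_def using X.herm[of "S y" "S x"] by simp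
      finally show ?thesis .
    qed
    have "ipY ip S \<xi> (Gplus J A B C \<xi>) = ip (S x) (S (- y)) + ip y (A x + J (B y) + C x)"
      unfolding xy Gf ipY_def by simp
    also have "S (- y) = - S y" using lin_on_minus(2)[OF Slin y] .
    also have "ip (S x) (- S y) = - z" unfolding z_def using X.minus2 by simp
    also have "ip y (A x + J (B y) + C x) = cnj z + \<i> * w + ip y (C x)"
      unfolding w_def using X.add2 X.J2 e1 by simp
    finally have eq: "Re (ipY ip S \<xi> (Gplus J A B C \<xi>)) = - Im w + Re (ip y (C x))" by simp
    have b1: "\<bar>Im w\<bar> \<le> Kb * cnorm ip y ^ 2" unfolding w_def using Kb(2)[OF y] .
    have b2: "\<bar>Re (ip y (C x))\<bar> \<le> \<kappa> * (cnorm ip y ^ 2 + cnorm ip (S x) ^ 2)"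
    proof -
      have "(cnorm ip y - cnorm ip (S x))^2 \<ge> 0" by simp
      hence "2 * (cnorm ip y * cnorm ip (S x)) \<le> cnorm ip y ^ 2 + cnorm ip (S x) ^ 2"
        by (simp add: power2_eq_square algebra_simps)
      moreover have "cnorm ip y * cnorm ip (S x) \<ge> 0" using cnn by simp
      ultimately have ab: "cnorm ip y * cnorm ip (S x) \<le> cnorm ip y ^ 2 + cnorm ip (S x) ^ 2" by linarith
      have "\<bar>Re (ip y (C x))\<bar> \<le> cnorm ip y * cnorm ip (C x)" using X.abs_CS_Re[of y "C x"] NX by simp
      also have "\<dots> \<le> cnorm ip y * (\<kappa> * cnorm ip (S x))" using Cb[OF x] cnn by (simp add: mult_left_mono)
      also have "\<dots> = \<kappa> * (cnorm ip y * cnorm ip (S x))" by simp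
      also have "\<dots> \<le> \<kappa> * (cnorm ip y ^ 2 + cnorm ip (S x) ^ 2)"
        using ab kap0 by (simp add: mult_left_mono)
      finally show ?thesis .
    qed
    have ny: "nY ip S \<xi> ^ 2 = cnorm ip (S x) ^ 2 + cnorm ip y ^ 2" using nYsq[of \<xi>] xy by simp
    have "\<bar>Re (ipY ip S \<xi> (Gplus J A B C \<xi>))\<bar> \<le> Kb * cnorm ip y ^ 2 + \<kappa> * (cnorm ip y ^ 2 + cnorm ip (S x) ^ 2)"
      unfolding eq using b1 b2 by linarith
    also have "\<dots> \<le> \<omega> * nY ip S \<xi> ^ 2" unfolding ny \<omega>_def using Kb(1)
      by (simp add: algebra_simps mult_left_mono)
    finally show ?thesis .
  qed
  have GV: "Gplus J A B C x \<in> Yset DS" if "x \<in> DH DA DS" for x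
    using that lin_on_minus(1)[OF Slin] by (simp add: Gf DH_iff Yset_iff)
  have Gadd: "Gplus J A B C (x + y) = Gplus J A B C x + Gplus J A B C y" if "x \<in> DH DA DS" "y \<in> DH DA DS" for x y
    using that AP(5) BP(5) CP(5) DA_DS cstr_lin[OF cstr] by (simp add: Gf DH_iff algebra_simps)
  have Gscale: "Gplus J A B C (r *\<^sub>R x) = r *\<^sub>R Gplus J A B C x" if "x \<in> DH DA DS" for x r
    using that AP(6) BP(6) CP(6) DA_DS cstr_lin[OF cstr] by (simp add: Gf DH_iff algebra_simps)
  have GmV: "- Gplus J A B C x \<in> Yset DS" if "x \<in> DH DA DS" for x using Y.Vminus GV that by simp
  have sP: "sgp (Yset DS) (ipY ip S) (pscale J \<i>) (DH DA DS) TP (Gplus J A B C) \<omega>"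
    by (rule sgp_conc[OF aY TP_sg TP_gen GV Gadd Gscale energy om])
  have TM_gen': "neg_generator ip S DS TM (DH DA DS) (\<lambda>x. - Gplus J A B C x)"
  proof -
    have "Gminus J A B C = (\<lambda>x. - Gplus J A B C x)" using Gminus_formula[OF cstr] by (intro ext) simp
    thus ?thesis using TM_gen by simp
  qed
  have sM: "sgp (Yset DS) (ipY ip S) (pscale J \<i>) (DH DA DS) TM (\<lambda>x. - Gplus J A B C x) \<omega>"
  proof (rule sgp_conc[OF aY TM_sg TM_gen'])
    show "\<And>x. x \<in> DH DA DS \<Longrightarrow> - Gplus J A B C x \<in> Yset DS" by (rule GmV)
    show "\<And>x y. x \<in> DH DA DS \<Longrightarrow> y \<in> DH DA DS \<Longrightarrow> - Gplus J A B C (x + y) = - Gplus J A B C x + - Gplus J A B C y"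
      using Gadd by simp
    show "\<And>x r. x \<in> DH DA DS \<Longrightarrow> - Gplus J A B C (r *\<^sub>R x) = r *\<^sub>R - Gplus J A B C x"
      using Gscale by simp
    show "\<And>x. x \<in> DH DA DS \<Longrightarrow> \<bar>Re (ipY ip S x (- Gplus J A B C x))\<bar> \<le> \<omega> * (nY ip S x)\<^sup>2"
    proof -
      fix x assume x: "x \<in> DH DA DS"
      have "ipY ip S x (- Gplus J A B C x) = - ipY ip S x (Gplus J A B C x)"
        using Y.minus2[of x "Gplus J A B C x"] GV[OF x] x YA.DV by simp
      thus "\<bar>Re (ipY ip S x (- Gplus J A B C x))\<bar> \<le> \<omega> * (nY ip S x)\<^sup>2" using energy[OF x] by simp
    qed
    show "0 \<le> \<omega>" by (rule om)
  qed
  interpret GR: grp "Yset DS" "ipY ip S" "pscale J \<i>" "DH DA DS" TP TM "Gplus J A B C" \<omega>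
    by (rule grp.intro[OF aY], rule grp_axioms.intro[OF sP sM])
  have Ueq: "(\<lambda>t. if 0 \<le> t then TP t else TM (- t)) = GR.U" by (rule ext) (simp add: GR.U_def)
  have NL: "Y.Nlim F f l \<longleftrightarrow> ((\<lambda>x. nY ip S (f x - l)) \<longlongrightarrow> 0) F" for F :: "real filter" and f l
    unfolding Y.Nlim_def NY ..
  have hYd: "has_Y_derivative ip S u v t \<longleftrightarrow> Y.Nlim (at 0) (\<lambda>h. (1/h) *\<^sub>R (u (t + h) - u t)) v" for u v t
    unfolding has_Y_derivative_def NL ..
  have part1: "sc_group J ip S DS (\<lambda>t. if 0 \<le> t then TP t else TM (- t))"
    unfolding Ueq sc_group_def
  proof (intro conjI allI ballI)
    fix t
    show "bounded_lin_Y J ip S DS (GR.U t)"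
      unfolding GR.U_def using TP_sg TM_sg unfolding sc_semigroup_def by auto
  next
    fix \<xi> assume "\<xi> \<in> Yset DS" thus "GR.U 0 \<xi> = \<xi>" by (rule GR.U0)
  next
    fix s t \<xi> assume "\<xi> \<in> Yset DS" thus "GR.U (s + t) \<xi> = GR.U s (GR.U t \<xi>)" by (rule GR.Ugroup)
  next
    fix \<xi> t assume "\<xi> \<in> Yset DS" thus "((\<lambda>s. nY ip S (GR.U s \<xi> - GR.U t \<xi>)) \<longlongrightarrow> 0) (at t)"
      using GR.Ucont NY by simp
  qed
  have part2: "\<forall>t0. \<forall>\<xi>\<in>DH DA DS. \<exists>!u. u t0 = \<xi> \<and>
          (\<forall>t. u t \<in> DH DA DS \<and> has_Y_derivative ip S u (- Gplus J A B C (u t)) t)"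
    unfolding hYd using GR.ode_exists_unique by blast
  have part3: "\<forall>u. (\<forall>t. u t \<in> DH DA DS \<and> has_Y_derivative ip S u (- Gplus J A B C (u t)) t) \<longrightarrow>
          (\<forall>t. ((\<lambda>s. ipY ip S (u s) (u s)) has_vector_derivative
                  complex_of_real (- 2 * Re (ipY ip S (u t) (Gplus J A B C (u t))))) (at t))"
  proof (intro allI impI)
    fix u t
    assume h: "\<forall>t. u t \<in> DH DA DS \<and> has_Y_derivative ip S u (- Gplus J A B C (u t)) t"
    have uV: "u s \<in> Yset DS" for s using h YA.DV by blast
    have d: "Y.Nlim (at 0) (\<lambda>h. (1/h) *\<^sub>R (u (t + h) - u t)) (- Gplus J A B C (u t))" using h hYd by blast
    have "((\<lambda>s. ipY ip S (u s) (u s)) has_vector_derivative complex_of_real (2 * Re (ipY ip S (u t) (- Gplus J A B C (u t))))) (at t)"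
      by (rule Y.energy_deriv[OF uV GmV d]) (use h in blast)
    moreover have "ipY ip S (u t) (- Gplus J A B C (u t)) = - ipY ip S (u t) (Gplus J A B C (u t))"
      using Y.minus2[of "u t" "Gplus J A B C (u t)"] uV GV h by blast
    ultimately show "((\<lambda>s. ipY ip S (u s) (u s)) has_vector_derivative
                  complex_of_real (- 2 * Re (ipY ip S (u t) (Gplus J A B C (u t))))) (at t)" by simp
  qed
  show ?thesis using part1 part2 part3 by blast
qed


end
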